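(* Assume $(H_S(\infty))$, let $\mathbf a_\lambda,\mathbf m_\lambda$ be as in the context, let $(N^S_t(i))_{t\ge0,i\in\mathbb{Z}}$ be i.i.d. $SR(\mu_S)$-processes and $\zeta^\lambda_t(i)=\min(N^S_{\mathbf a_\lambda t}(i),1)$. (i) With $K^\lambda_t=(2\mathbf m_\lambda+1)^{-1}\#\{i\in\{-\mathbf m_\lambda,\dots,\mathbf m_\lambda\}:\zeta^\lambda_t(i)>0\}$ and $U^\lambda_t=(\psi_S(K^\lambda_t)/\mathbf a_\lambda)\wedge1$, for all $\varepsilon>0$ and $T>0$, $\lim_{\lambda\to0}\Pr[\sup_{t\in[0,T]}|U^\lambda_t-t\wedge1|>\varepsilon]=0$. (ii) With $C^\lambda_t=C(\zeta^\lambda_t,0)$ and $V^\lambda_t=\big(\mathbf a_\lambda^{-1}\psi_S(1-1/|C^\lambda_t|)\mathbf 1_{\{|C^\lambda_t|>0\}}\big)\wedge1$, for all $\varepsilon>0$ and all $t\in[0,1)$, $\lim_{\lambda\to0}\Pr[C^\lambda_t\subset\{-\mathbf m_\lambda,\dots,\mathbf m_\lambda\},\ |V^\lambda_t-t|<\varepsilon]=1$.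
   Context: $(H_S(\infty))$: $\mu_S$ is a probability measure on $(0,\infty)$ with unbounded support and finite mean $m_S$; with $\nu_S(dt)=m_S^{-1}\mu_S((t,\infty))dt$, for all $t>0$, $\lim_{x\to\infty}\nu_S((x,\infty))/\nu_S((tx,\infty))=t^\infty$ ($=0,1,\infty$ according as $t<1,t=1,t>1$). $\psi_S:(0,1)\to(0,\infty)$ is the inverse of $t\mapsto\nu_S((0,t))$, extended by $\psi_S(0)=0$, $\psi_S(1)=\infty$. $\mathbf a_\lambda$ solves $\lambda\mathbf a_\lambda=\nu_S((\mathbf a_\lambda,\infty))$, $\mathbf n_\lambda=\lfloor1/(\lambda\mathbf a_\lambda)\rfloor$, and $\mathbf m_\lambda:(0,1]\to\mathbb{N}$ is non-increasing with $\mathbf m_\lambda\to\infty$, $\mathbf m_\lambda/\mathbf n_\lambda\to0$ and $\mathbf m_\lambda\nu_S((\mathbf a_\lambda z,\infty))\to\infty$ for every $z\in[0,1)$. A $SR(\mu)$-process: $N_t=\#\{k\ge1:T_k\le t\}$ with $T_1\sim\nu_\mu(dt)=m_\mu^{-1}\mu((t,\infty))dt$, $T_{k+1}=T_k+X_k$, $(X_k)$ i.i.d. with law $\mu$ independent of $T_1$. $C(\eta,i)$ is $\emptyset$ if $\eta(i)=0$, otherwise the maximal block of consecutive integers containing $i$ where $\eta\equiv1$. *)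

theory Defs
  imports "HOL-Probability.Probability"
begin

definition mean_of :: "real measure \<Rightarrow> real" where
  "mean_of mu = (\<integral>x. x \<partial>mu)"

definition stat_nu :: "real measure \<Rightarrow> real measure" where
  "stat_nu mu = density lborel
     (\<lambda>t. ennreal (indicator {0<..} t * measure mu {t<..} / mean_of mu))"

definition psi_of :: "real measure \<Rightarrow> real \<Rightarrow> ereal" where
  "psi_of nu u = (if u \<le> 0 then 0 else if u \<ge> 1 then \<infinity>
      else ereal (THE s. 0 < s \<and> measure nu {0<..<s} = u))"

definition sr_time :: "real \<Rightarrow> (nat \<Rightarrow> real) \<Rightarrow> nat \<Rightarrow> real" where
  "sr_time T1 X k = T1 + (\<Sum>j\<in>{1..<k}. X j)"

definition sr_count :: "real \<Rightarrow> (nat \<Rightarrow> real) \<Rightarrow> real \<Rightarrow> enat" where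
  "sr_count T1 X t = (let S = {k::nat. 1 \<le> k \<and> sr_time T1 X k \<le> t} in
      if finite S then enat (card S) else \<infinity>)"

definition cluster :: "(int \<Rightarrow> 'b::{zero,one}) \<Rightarrow> int \<Rightarrow> int set" where
  "cluster eta i = (if eta i = 0 then {}
      else {j. \<forall>k\<in>{min i j..max i j}. eta k = 1})"

definition zeta :: "(int \<Rightarrow> 'a \<Rightarrow> real) \<Rightarrow> (int \<Rightarrow> nat \<Rightarrow> 'a \<Rightarrow> real) \<Rightarrow> real
     \<Rightarrow> real \<Rightarrow> int \<Rightarrow> 'a \<Rightarrow> enat" where
  "zeta T1 X a t i \<omega> = min (sr_count (T1 i \<omega>) (\<lambda>k. X i k \<omega>) (a * t)) 1"

definition K_frac :: "(int \<Rightarrow> 'a \<Rightarrow> real) \<Rightarrow> (int \<Rightarrow> nat \<Rightarrow> 'a \<Rightarrow> real) \<Rightarrow> real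
     \<Rightarrow> nat \<Rightarrow> real \<Rightarrow> 'a \<Rightarrow> real" where
  "K_frac T1 X a m t \<omega> =
     real (card {i\<in>{- int m..int m}. zeta T1 X a t i \<omega> > 0}) / real (2 * m + 1)"

definition U_proc :: "real measure \<Rightarrow> (int \<Rightarrow> 'a \<Rightarrow> real) \<Rightarrow> (int \<Rightarrow> nat \<Rightarrow> 'a \<Rightarrow> real)
     \<Rightarrow> real \<Rightarrow> nat \<Rightarrow> real \<Rightarrow> 'a \<Rightarrow> real" where
  "U_proc nu T1 X a m t \<omega> =
     real_of_ereal (min (psi_of nu (K_frac T1 X a m t \<omega>) / ereal a) 1)"

definition C_clus :: "(int \<Rightarrow> 'a \<Rightarrow> real) \<Rightarrow> (int \<Rightarrow> nat \<Rightarrow> 'a \<Rightarrow> real) \<Rightarrow> real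
     \<Rightarrow> real \<Rightarrow> 'a \<Rightarrow> int set" where
  "C_clus T1 X a t \<omega> = cluster (\<lambda>i. zeta T1 X a t i \<omega>) 0"

(* V^lambda_t = (a^{-1} psi(1 - 1/|C|) 1_{|C|>0}) \<and> 1, with 1/\<infinity> = 0 *)
definition V_proc :: "real measure \<Rightarrow> (int \<Rightarrow> 'a \<Rightarrow> real) \<Rightarrow> (int \<Rightarrow> nat \<Rightarrow> 'a \<Rightarrow> real)
     \<Rightarrow> real \<Rightarrow> real \<Rightarrow> 'a \<Rightarrow> real" where
  "V_proc nu T1 X a t \<omega> = (let C = C_clus T1 X a t \<omega> in
     real_of_ereal (min (if C = {} then 0
        else psi_of nu (if finite C then 1 - 1 / real (card C) else 1) / ereal a) 1))"

end

theory Submission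
  imports Defs
begin

locale SR = prob_space M for M :: "'a measure" +
  fixes muS :: "real measure" and T1 :: "int \<Rightarrow> 'a \<Rightarrow> real"
    and X :: "int \<Rightarrow> nat \<Rightarrow> 'a \<Rightarrow> real" and a :: "real \<Rightarrow> real" and m :: "real \<Rightarrow> nat"
  assumes mu_prob: "prob_space muS" and mu_sets: "sets muS = sets borel"
    and mu_pos: "measure muS {0<..} = 1"
    and mu_unbdd: "\<forall>x. measure muS {x<..} > 0"
    and Hinf: "\<And>t. t > 1 \<Longrightarrow> filterlim (\<lambda>x. measure (stat_nu muS) {x<..} / measure (stat_nu muS) {t*x<..})
                              at_top at_top"
    and a_def: "\<forall>l\<in>{0<..1}. l * a l = measure (stat_nu muS) {a l<..}"
    and m_nu: "\<forall>z\<in>{0..<1}. filterlim (\<lambda>l. real (m l) * measure (stat_nu muS) {a l * z<..})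
                               at_top (at_right 0)"
    and indep: "indep_vars (\<lambda>_. borel)
                  (\<lambda>p. case p of (i, 0) \<Rightarrow> T1 i | (i, Suc k) \<Rightarrow> X i (Suc k)) UNIV"
    and T1_distr: "\<forall>i. distr M borel (T1 i) = stat_nu muS"
    and X_distr: "\<forall>i. \<forall>k\<ge>1. distr M borel (X i k) = muS"
begin

abbreviation "nu \<equiv> stat_nu muS"
definition G where "G x = measure nu {x<..}"
definition F where "F x = measure nu {0<..<x}"
definition gg where "gg t = ennreal (indicator {0<..} t * measure muS {t<..} / mean_of muS)"
abbreviation "mn \<equiv> mean_of muS"

lemma rv_T1[measurable]: "T1 i \<in> borel_measurable M"
proof -
  have "random_variable borel ((\<lambda>p. case p of (i, 0) \<Rightarrow> T1 i | (i, Suc k) \<Rightarrow> X i (Suc k)) (i,0))"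
    using indep unfolding indep_vars_def by blast
  thus ?thesis by simp
qed

lemma rv_X[measurable]: "k \<ge> 1 \<Longrightarrow> X i k \<in> borel_measurable M"
proof -
  assume "k \<ge> 1" then obtain j where k: "k = Suc j" by (cases k) auto
  have "random_variable borel ((\<lambda>p. case p of (i, 0) \<Rightarrow> T1 i | (i, Suc k) \<Rightarrow> X i (Suc k)) (i,Suc j))"
    using indep unfolding indep_vars_def by blast
  thus ?thesis by (simp add: k)
qed

lemma nu_distr: "distr M borel (T1 0) = nu" using T1_distr by blast

lemma nu_prob: "prob_space nu"
  using prob_space_distr[OF rv_T1[of 0]] nu_distr by simp

sublocale nu: prob_space nu by (rule nu_prob)

lemma sets_nu[simp, measurable_cong]: "sets nu = sets borel"
  by (simp add: stat_nu_def)

lemma space_nu[simp]: "space nu = UNIV"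
  by (simp add: stat_nu_def)

lemma T1_prob: "A \<in> sets borel \<Longrightarrow> prob {\<omega>\<in>space M. T1 i \<omega> \<in> A} = measure nu A"
proof -
  assume A: "A \<in> sets borel"
  have "measure nu A = measure (distr M borel (T1 i)) A" using T1_distr by simp
  also have "\<dots> = prob (T1 i -` A \<inter> space M)" using A by (simp add: measure_distr)
  finally show ?thesis by (simp add: Int_def conj_commute vimage_def)
qed

lemma mu_mono: "s \<le> t \<Longrightarrow> measure muS {t<..} \<le> measure muS {s<..}"
proof -
  assume "s \<le> t"
  interpret mu: prob_space muS by (rule mu_prob)
  show ?thesis using \<open>s \<le> t\<close> by (intro mu.finite_measure_mono) (auto simp: mu_sets)
qed

lemma mu_le1: "measure muS A \<le> 1"
proof -
  interpret mu: prob_space muS by (rule mu_prob)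
  show ?thesis by (rule mu.prob_le_1)
qed

lemma gg_meas[measurable]: "gg \<in> borel_measurable borel"
proof -
  have "(\<lambda>t. - measure muS {t<..}) \<in> borel_measurable borel"
    by (rule borel_measurable_mono) (auto simp: mono_def intro: mu_mono)
  hence "(\<lambda>t. measure muS {t<..}) \<in> borel_measurable borel"
    using borel_measurable_uminus by fastforce
  thus ?thesis unfolding gg_def by measurable
qed

lemma nu_density: "nu = density lborel gg"
  by (simp add: stat_nu_def gg_def[abs_def])

lemma emeasure_nu: "A \<in> sets borel \<Longrightarrow> emeasure nu A = (\<integral>\<^sup>+ x. gg x * indicator A x \<partial>lborel)"
  unfolding nu_density by (rule emeasure_density) auto

lemma mean_pos: "mn > 0"
proof (rule ccontr)
  assume "\<not> mn > 0"
  hence "\<And>t. gg t = 0" unfolding gg_def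
    by (intro ennreal_eq_0_iff[THEN iffD2]) (auto simp: divide_nonneg_nonpos indicator_def measure_nonneg)
  hence "emeasure nu UNIV = 0" by (simp add: emeasure_nu)
  moreover have "emeasure nu UNIV = 1"
    using prob_space.emeasure_space_1[OF nu_prob] by simp
  ultimately show False by simp
qed

lemma gg_le: "gg t \<le> ennreal (1 / mn)"
  unfolding gg_def using mean_pos mu_le1
  by (intro ennreal_leI) (auto simp: indicator_def divide_right_mono)

lemma nu_upper: "A \<subseteq> {x..y} \<Longrightarrow> x \<le> y \<Longrightarrow> A \<in> sets borel \<Longrightarrow> measure nu A \<le> (y - x) / mn"
proof -
  assume A: "A \<subseteq> {x..y}" "x \<le> y" "A \<in> sets borel"
  have "emeasure nu A \<le> (\<integral>\<^sup>+ t. ennreal (1/mn) * indicator {x..y} t \<partial>lborel)"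
    unfolding emeasure_nu[OF A(3)]
    by (intro nn_integral_mono) (use A gg_le in \<open>auto simp: indicator_def\<close>)
  also have "\<dots> = ennreal ((y-x)/mn)"
    using A mean_pos by (simp add: nn_integral_cmult_indicator ennreal_mult[symmetric])
  finally have "emeasure nu A \<le> ennreal ((y-x)/mn)" .
  thus ?thesis using A mean_pos
    by (simp add: nu.emeasure_eq_measure ennreal_le_iff)
qed

lemma nu_lower: "x < y \<Longrightarrow> 0 \<le> x \<Longrightarrow> measure nu {x<..<y} \<ge> (y - x) * measure muS {y<..} / mn"
proof -
  assume A: "x < y" "0 \<le> x"
  have "ennreal ((y - x) * measure muS {y<..} / mn)
      = (\<integral>\<^sup>+ t. ennreal (measure muS {y<..} / mn) * indicator {x<..<y} t \<partial>lborel)"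
    using A mean_pos by (subst nn_integral_cmult_indicator) (auto simp: ennreal_mult[symmetric] mult.commute)
  also have "\<dots> \<le> (\<integral>\<^sup>+ t. gg t * indicator {x<..<y} t \<partial>lborel)"
    using A mean_pos
    by (intro nn_integral_mono) (auto simp: indicator_def gg_def intro!: ennreal_leI divide_right_mono mu_mono)
  also have "\<dots> = emeasure nu {x<..<y}" by (rule emeasure_nu[symmetric]) simp
  finally show ?thesis using A mean_pos
    by (simp add: nu.emeasure_eq_measure ennreal_le_iff)
qed

end

context SR begin

lemma G_nonneg: "G x \<ge> 0" by (simp add: G_def)
lemma G_le1: "G x \<le> 1" by (simp add: G_def)
lemma G_anti: "x \<le> y \<Longrightarrow> G y \<le> G x"
  unfolding G_def by (intro nu.finite_measure_mono) auto

lemma G_pos: "G x > 0"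
proof -
  have "filterlim (\<lambda>x. G x / G (2*x)) at_top at_top" using Hinf[of 2] by (simp add: G_def)
  hence "eventually (\<lambda>x. G x / G (2*x) \<ge> 1) at_top" by (simp add: filterlim_at_top)
  then obtain x0 where x0: "\<And>x. x \<ge> x0 \<Longrightarrow> G x / G (2*x) \<ge> 1" by (auto simp: eventually_at_top_linorder)
  define z where "z = max x0 \<bar>x\<bar> + 1"
  have "G z / G (2*z) \<ge> 1" by (rule x0) (simp add: z_def)
  hence "G (2*z) \<noteq> 0" by auto
  hence "G (2*z) > 0" using G_nonneg[of "2*z"] by linarith
  moreover have "G (2*z) \<le> G x" by (rule G_anti) (auto simp: z_def)
  ultimately show ?thesis by linarith
qed

lemma nu_nonpos: "measure nu {..0} = 0"
proof -
  have "emeasure nu {..0} = (\<integral>\<^sup>+ x. gg x * indicator {..0} x \<partial>lborel)"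
    by (rule emeasure_nu) simp
  also have "\<dots> = (\<integral>\<^sup>+ x. (0::ennreal) \<partial>(lborel::real measure))"
    by (intro nn_integral_cong) (simp add: gg_def indicator_def)
  finally show ?thesis by (simp add: measure_def)
qed

lemma nu_pos1: "measure nu {0<..} = 1"
proof -
  have "measure nu (space nu - {..0}) = 1 - measure nu {..0}"
    by (rule nu.prob_compl) simp
  moreover have "space nu - {..0} = {0<..}" by auto
  ultimately show ?thesis using nu_nonpos by simp
qed

lemma nu_point: "measure nu {x} = 0"
  using nu_upper[of "{x}" x x] by (simp add: measure_nonneg antisym)

lemma FG: "0 < x \<Longrightarrow> F x + G x = 1"
proof -
  assume x: "0 < x"
  have e: "{0<..} = {0<..<x} \<union> ({x} \<union> {x<..})" using x by auto
  have "measure nu ({0<..<x} \<union> ({x} \<union> {x<..})) = measure nu {0<..<x} + measure nu ({x} \<union> {x<..})"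
    by (intro nu.finite_measure_Union) auto
  also have "measure nu ({x} \<union> {x<..}) = measure nu {x} + measure nu {x<..}"
    by (intro nu.finite_measure_Union) auto
  finally show ?thesis using nu_pos1 e nu_point by (simp add: F_def G_def)
qed

lemma F_nonneg: "F x \<ge> 0" by (simp add: F_def)

lemma F_lt1: "0 < x \<Longrightarrow> F x < 1" using FG[of x] G_pos[of x] by linarith

lemma F_lip: "0 \<le> x \<Longrightarrow> x \<le> y \<Longrightarrow> F y - F x \<le> (y - x) / mn"
proof -
  assume xy: "0 \<le> x" "x \<le> y"
  have "F y \<le> measure nu ({0<..<x} \<union> {x..y})"
    unfolding F_def by (intro nu.finite_measure_mono) auto
  also have "\<dots> = F x + measure nu {x..y}"
    unfolding F_def by (intro nu.finite_measure_Union) auto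
  also have "measure nu {x..y} \<le> (y - x) / mn" by (rule nu_upper) (use xy in auto)
  finally show ?thesis by simp
qed

lemma F_mono: "x \<le> y \<Longrightarrow> F x \<le> F y"
  unfolding F_def by (intro nu.finite_measure_mono) auto

lemma F_strict: "0 \<le> x \<Longrightarrow> x < y \<Longrightarrow> F x < F y"
proof -
  assume xy: "0 \<le> x" "x < y"
  have "F x + measure nu {x<..<y} = measure nu ({0<..<x} \<union> {x<..<y})"
    unfolding F_def by (intro nu.finite_measure_Union[symmetric]) auto
  also have "\<dots> \<le> F y" unfolding F_def by (intro nu.finite_measure_mono) (use xy in auto)
  finally have "F x + measure nu {x<..<y} \<le> F y" .
  moreover have "measure nu {x<..<y} > 0"
  proof -
    have "(y - x) * measure muS {y<..} / mn > 0"
      using xy mu_unbdd mean_pos by auto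
    thus ?thesis using nu_lower[OF xy(2,1)] by linarith
  qed
  ultimately show ?thesis by linarith
qed

lemma F_cont: "continuous_on {0..} F"
proof (rule lipschitz_on_continuous_on)
  show "(1/mn)-lipschitz_on {0..} F"
  proof (rule lipschitz_onI)
    fix x y :: real assume "x \<in> {0..}" "y \<in> {0..}"
    thus "dist (F x) (F y) \<le> 1 / mn * dist x y"
      using F_lip[of x y] F_lip[of y x] F_mono[of x y] F_mono[of y x]
      by (cases "x \<le> y") (auto simp: dist_real_def abs_if)
  qed (use mean_pos in auto)
qed

lemma G_lim: "(G \<longlongrightarrow> 0) at_top"
proof -
  have "filterlim (\<lambda>x. G x / G (2*x)) at_top at_top" using Hinf[of 2] by (simp add: G_def)
  hence "((\<lambda>x. inverse (G x / G (2*x))) \<longlongrightarrow> 0) at_top" by (rule tendsto_inverse_0_at_top)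
  hence l: "((\<lambda>x. G (2*x) / G x) \<longlongrightarrow> 0) at_top" by simp
  have "((\<lambda>x. G (2*x)) \<longlongrightarrow> 0) at_top"
  proof (rule tendsto_sandwich[OF _ _ tendsto_const l])
    show "\<forall>\<^sub>F n in at_top. 0 \<le> G (2 * n)" by (simp add: G_nonneg)
    show "\<forall>\<^sub>F n in at_top. G (2 * n) \<le> G (2 * n) / G n"
    proof (intro always_eventually allI)
      fix n
      have "G (2*n) * G n \<le> G (2*n) * 1" using G_le1 G_nonneg by (intro mult_left_mono) auto
      thus "G (2 * n) \<le> G (2 * n) / G n" using G_pos[of n] by (simp add: field_simps)
    qed
  qed
  moreover have "filterlim (\<lambda>x::real. x * (1/2)) at_top at_top"
    by (rule filterlim_at_top_mult_tendsto_pos[OF tendsto_const _ filterlim_ident]) simp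
  ultimately have "((\<lambda>x. G (2*(x * (1/2)))) \<longlongrightarrow> 0) at_top"
    by (rule filterlim_compose[where g="\<lambda>x. G (2*x)"])
  thus ?thesis by simp
qed

lemma psi_ex: "0 < u \<Longrightarrow> u < 1 \<Longrightarrow> \<exists>!s. 0 < s \<and> F s = u"
proof -
  assume u: "0 < u" "u < 1"
  have "eventually (\<lambda>x. G x < 1 - u) at_top"
    using G_lim u by (intro order_tendstoD) auto
  then obtain y0 where y0: "\<And>x. x \<ge> y0 \<Longrightarrow> G x < 1 - u" by (auto simp: eventually_at_top_linorder)
  define y where "y = max y0 1"
  have "y > 0" by (simp add: y_def)
  have "F y > u" using y0[of y] FG[OF \<open>y>0\<close>] by (simp add: y_def)
  have F0: "F 0 = 0" by (simp add: F_def)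
  have "continuous_on {0..y} F" using F_cont by (rule continuous_on_subset) auto
  then obtain s where s: "0 \<le> s" "s \<le> y" "F s = u"
    using IVT'[of F 0 u y] F0 u \<open>F y > u\<close> \<open>y>0\<close> by auto
  have "s \<noteq> 0" using s F0 u by auto
  hence ex: "0 < s \<and> F s = u" using s by auto
  show ?thesis
  proof (rule ex1I[of _ s])
    show "0 < s \<and> F s = u" by (rule ex)
    fix s' assume s': "0 < s' \<and> F s' = u"
    show "s' = s"
    proof (rule ccontr)
      assume "s' \<noteq> s"
      hence "s' < s \<or> s < s'" by auto
      thus False using F_strict[of s' s] F_strict[of s s'] s' ex by auto
    qed
  qed
qed

lemma psi_eq: "0 < u \<Longrightarrow> u < 1 \<Longrightarrow> \<exists>s. 0 < s \<and> F s = u \<and> psi_of nu u = ereal s"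
proof -
  assume u: "0 < u" "u < 1"
  from psi_ex[OF u] obtain s where s: "0 < s \<and> F s = u" by auto
  have "(THE s. 0 < s \<and> measure nu {0<..<s} = u) = s"
    using psi_ex[OF u] s unfolding F_def[symmetric] by (intro the1_equality) auto
  thus ?thesis using s u by (auto simp: psi_of_def F_def)
qed

lemma psi_le_iff: "0 < x \<Longrightarrow> psi_of nu u \<le> ereal x \<longleftrightarrow> u \<le> F x"
proof -
  assume x: "0 < x"
  consider "u \<le> 0" | "u \<ge> 1" | "0 < u \<and> u < 1" by linarith
  thus ?thesis
  proof cases
    case 1 thus ?thesis using x F_nonneg[of x] by (auto simp: psi_of_def)
  next
    case 2 thus ?thesis using F_lt1[OF x] by (auto simp: psi_of_def)
  next
    case 3
    then obtain s where s: "0 < s" "F s = u" "psi_of nu u = ereal s" using psi_eq by blast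
    show ?thesis
    proof
      assume "psi_of nu u \<le> ereal x"
      hence "s \<le> x" using s by simp
      thus "u \<le> F x" using F_mono s by auto
    next
      assume "u \<le> F x"
      hence "\<not> x < s" using F_strict[of x s] s x by auto
      thus "psi_of nu u \<le> ereal x" using s by simp
    qed
  qed
qed

lemma psi_nonneg: "psi_of nu u \<ge> 0"
proof -
  consider "u \<le> 0" | "u \<ge> 1" | "0 < u \<and> u < 1" by linarith
  thus ?thesis
  proof cases
    case 3 thus ?thesis using psi_eq[of u] by force
  qed (auto simp: psi_of_def)
qed

lemma psi_mono: "u \<le> v \<Longrightarrow> psi_of nu u \<le> psi_of nu v"
proof -
  assume uv: "u \<le> v"
  consider "v \<le> 0" | "v \<ge> 1" | "0 < v \<and> v < 1" by linarith
  thus ?thesis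
  proof cases
    case 1 thus ?thesis using uv by (auto simp: psi_of_def)
  next
    case 2 thus ?thesis by (auto simp: psi_of_def)
  next
    case 3
    then obtain s where s: "0 < s" "F s = v" "psi_of nu v = ereal s" using psi_eq by blast
    have "psi_of nu u \<le> ereal s" using psi_le_iff[OF s(1), of u] uv s by simp
    thus ?thesis using s by simp
  qed
qed

lemma a_pos: "l \<in> {0<..1} \<Longrightarrow> a l > 0"
proof (rule ccontr)
  assume l: "l \<in> {0<..1}" and "\<not> a l > 0"
  hence "l * a l \<le> 0" by (auto simp: mult_nonneg_nonpos)
  moreover have "G (a l) \<ge> G 0" using \<open>\<not> a l > 0\<close> by (intro G_anti) auto
  moreover have "G 0 = 1" using nu_pos1 by (simp add: G_def)
  ultimately show False using a_def l by (simp add: G_def)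
qed

lemma aG: "l \<in> {0<..1} \<Longrightarrow> l * a l = G (a l)"
  using a_def by (simp add: G_def)

lemma a_inf: "filterlim a at_top (at_right 0)"
proof (subst filterlim_at_top_gt[where c=0], intro allI impI)
  fix B :: real assume B: "B > 0"
  show "eventually (\<lambda>l. B \<le> a l) (at_right 0)"
    unfolding eventually_at_right_field
  proof (intro exI[of _ "min 1 (G B / B)"] conjI allI impI)
    show "0 < min 1 (G B/B)" using B G_pos[of B] by auto
    fix l :: real assume l: "0 < l" "l < min 1 (G B / B)"
    show "B \<le> a l"
    proof (rule ccontr)
      assume nB: "\<not> B \<le> a l"
      have lin: "l \<in> {0<..1}" using l by auto
      have "G B \<le> G (a l)" using nB by (intro G_anti) auto
      also have "\<dots> = l * a l" using aG[OF lin] by simp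
      also have "\<dots> \<le> l * B" using nB l by (intro mult_left_mono) auto
      also have "\<dots> < G B / B * B" using l B by (intro mult_strict_right_mono) auto
      also have "\<dots> = G B" using B by simp
      finally show False by simp
    qed
  qed
qed

lemma a_pos_ev: "eventually (\<lambda>l::real. l \<in> {0<..1}) (at_right 0)"
  by (auto simp: eventually_at_right_field intro!: exI[of _ 1])

lemma ratio_inf: "0 < u \<Longrightarrow> u < v \<Longrightarrow> filterlim (\<lambda>l. G (a l * u) / G (a l * v)) at_top (at_right 0)"
proof -
  assume uv: "0 < u" "u < v"
  have "filterlim (\<lambda>x. G x / G ((v/u)*x)) at_top at_top" using Hinf[of "v/u"] uv by (simp add: G_def)
  moreover have "filterlim (\<lambda>l. a l * u) at_top (at_right 0)"
    by (rule filterlim_at_top_mult_tendsto_pos[OF tendsto_const uv(1) a_inf])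
  ultimately have "filterlim (\<lambda>l. G (a l * u) / G ((v/u) * (a l * u))) at_top (at_right 0)"
    by (rule filterlim_compose[where g="\<lambda>x. G x / G ((v/u)*x)"])
  moreover have "(v/u) * (a l * u) = a l * v" for l using uv by (simp add: field_simps)
  ultimately show ?thesis by simp
qed

lemma ratio_0: "0 < u \<Longrightarrow> u < v \<Longrightarrow> ((\<lambda>l. G (a l * v) / G (a l * u)) \<longlongrightarrow> 0) (at_right 0)"
  using tendsto_inverse_0_at_top[OF ratio_inf] by simp

lemma G_at_0: "0 < t \<Longrightarrow> ((\<lambda>l. G (a l * t)) \<longlongrightarrow> 0) (at_right 0)"
proof -
  assume t: "0 < t"
  show ?thesis
  proof (rule tendsto_sandwich[OF _ _ tendsto_const ratio_0[of "t/2" t]])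
    show "\<forall>\<^sub>F n in at_right 0. 0 \<le> G (a n * t)" by (simp add: G_nonneg)
    show "\<forall>\<^sub>F n in at_right 0. G (a n * t) \<le> G (a n * t) / G (a n * (t / 2))"
    proof (intro always_eventually allI)
      fix n
      have "G (a n * t) * G (a n * (t/2)) \<le> G (a n * t) * 1" using G_le1 G_nonneg by (intro mult_left_mono) auto
      thus "G (a n * t) \<le> G (a n * t) / G (a n * (t/2))" using G_pos[of "a n * (t/2)"] by (simp add: field_simps)
    qed
  qed (use t in auto)
qed

end

definition occ :: "(int \<Rightarrow> 'a \<Rightarrow> real) \<Rightarrow> (int \<Rightarrow> nat \<Rightarrow> 'a \<Rightarrow> real) \<Rightarrow> real \<Rightarrow> real \<Rightarrow> int \<Rightarrow> 'a \<Rightarrow> bool" where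
  "occ T1 X c t i \<omega> \<longleftrightarrow> (\<exists>k\<ge>1. sr_time (T1 i \<omega>) (\<lambda>k. X i k \<omega>) k \<le> c * t)"

lemma zeta_occ: "zeta T1 X c t i \<omega> = (if occ T1 X c t i \<omega> then 1 else 0)"
proof -
  define S where "S = {k::nat. 1 \<le> k \<and> sr_time (T1 i \<omega>) (\<lambda>k. X i k \<omega>) k \<le> c * t}"
  have z: "zeta T1 X c t i \<omega> = min (if finite S then enat (card S) else \<infinity>) 1"
    by (simp add: zeta_def sr_count_def S_def)
  have o: "occ T1 X c t i \<omega> \<longleftrightarrow> S \<noteq> {}" by (auto simp: occ_def S_def)
  show ?thesis
  proof (cases "S = {}")
    case True thus ?thesis using z o by (simp add: zero_enat_def[symmetric])
  next
    case False
    show ?thesis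
    proof (cases "finite S")
      case True
      hence "card S \<ge> 1" using False by (simp add: Suc_le_eq card_gt_0_iff)
      hence "min (enat (card S)) 1 = 1" by (simp add: one_enat_def min_def)
      thus ?thesis using z o False True by simp
    qed (use z o False in simp)
  qed
qed

lemma zeta_pos: "zeta T1 X c t i \<omega> > 0 \<longleftrightarrow> occ T1 X c t i \<omega>"
  by (simp add: zeta_occ)

lemma occ_mono: "c > 0 \<Longrightarrow> t \<le> t' \<Longrightarrow> occ T1 X c t i \<omega> \<Longrightarrow> occ T1 X c t' i \<omega>"
proof -
  assume c: "c > 0" and tt: "t \<le> t'" and o: "occ T1 X c t i \<omega>"
  then obtain k where k: "k \<ge> 1" "sr_time (T1 i \<omega>) (\<lambda>k. X i k \<omega>) k \<le> c * t" by (auto simp: occ_def)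
  have "c * t \<le> c * t'" using c tt by (intro mult_left_mono) auto
  thus ?thesis using k unfolding occ_def by (intro exI[of _ k]) auto
qed

lemma occ_clean: "(\<forall>k\<ge>1. X i k \<omega> \<ge> 0) \<Longrightarrow> occ T1 X c t i \<omega> \<longleftrightarrow> T1 i \<omega> \<le> c * t"
proof
  assume nn: "\<forall>k\<ge>1. X i k \<omega> \<ge> 0" and "occ T1 X c t i \<omega>"
  then obtain k where k: "k \<ge> 1" "sr_time (T1 i \<omega>) (\<lambda>k. X i k \<omega>) k \<le> c * t" by (auto simp: occ_def)
  have "(\<Sum>j\<in>{1..<k}. X i j \<omega>) \<ge> 0" using nn by (intro sum_nonneg) auto
  thus "T1 i \<omega> \<le> c * t" using k by (simp add: sr_time_def)
next
  assume "T1 i \<omega> \<le> c * t"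
  thus "occ T1 X c t i \<omega>" unfolding occ_def by (intro exI[of _ 1]) (simp add: sr_time_def)
qed

definition clB :: "(int \<Rightarrow> bool) \<Rightarrow> int set" where
  "clB b = (if b 0 then {j. \<forall>k\<in>{min 0 j..max 0 j}. b k} else {})"

lemma C_clus_occ: "C_clus T1 X c t \<omega> = clB (\<lambda>i. occ T1 X c t i \<omega>)"
  unfolding C_clus_def cluster_def clB_def zeta_occ
  by (auto simp: one_enat_def zero_enat_def)

lemma clB_interval: "j \<in> clB b \<Longrightarrow> k \<in> {min 0 j..max 0 j} \<Longrightarrow> k \<in> clB b"
proof -
  assume j: "j \<in> clB b" and k: "k \<in> {min 0 j..max 0 j}"
  have b0: "b 0" and bj: "\<forall>x\<in>{min 0 j..max 0 j}. b x" using j unfolding clB_def by (auto split: if_splits)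
  have "\<forall>x\<in>{min 0 k..max 0 k}. b x"
  proof
    fix x assume "x \<in> {min 0 k..max 0 k}"
    hence "x \<in> {min 0 j..max 0 j}" using k by auto
    thus "b x" using bj by blast
  qed
  thus ?thesis using b0 by (simp add: clB_def)
qed

lemma clB_sub_iff: "M \<ge> 0 \<Longrightarrow> clB b \<subseteq> {-M..M} \<longleftrightarrow> M+1 \<notin> clB b \<and> -(M+1) \<notin> clB b"
proof
  assume "clB b \<subseteq> {-M..M}" thus "M+1 \<notin> clB b \<and> -(M+1) \<notin> clB b" by auto
next
  assume M: "M \<ge> 0" and n: "M+1 \<notin> clB b \<and> -(M+1) \<notin> clB b"
  show "clB b \<subseteq> {-M..M}"
  proof
    fix j assume j: "j \<in> clB b"
    show "j \<in> {-M..M}"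
    proof (rule ccontr)
      assume "j \<notin> {-M..M}"
      hence "j > M \<or> j < -M" by auto
      thus False
      proof
        assume "j > M" hence "M+1 \<in> clB b" using M by (intro clB_interval[OF j]) auto
        thus False using n by simp
      next
        assume "j < -M" hence "-(M+1) \<in> clB b" using M by (intro clB_interval[OF j]) auto
        thus False using n by simp
      qed
    qed
  qed
qed

lemma clB_restrict_mem:
  assumes "\<bar>j\<bar> \<le> M"
  shows "j \<in> clB b \<longleftrightarrow> j \<in> clB (\<lambda>i. if i \<in> {-M..M} then b i else False)"
proof -
  have in1: "\<forall>k\<in>{min 0 j..max 0 j}. k \<in> {-M..M}" using assms by (auto simp: abs_le_iff)
  have in0: "0 \<in> {-M..M}" using assms by auto
  have "(\<forall>k\<in>{min 0 j..max 0 j}. b k) \<longleftrightarrow> (\<forall>k\<in>{min 0 j..max 0 j}. (if k \<in> {-M..M} then b k else False))"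
    using in1 by auto
  thus ?thesis using in0 unfolding clB_def by simp
qed

lemma clB_restrict:
  fixes m :: nat and b :: "int \<Rightarrow> bool"
  defines "b' \<equiv> (\<lambda>i. if i \<in> {-(int m+1)..int m+1} then b i else False)"
  shows "clB b \<subseteq> {-int m..int m} \<longleftrightarrow> clB b' \<subseteq> {-int m..int m}"
    and "clB b \<subseteq> {-int m..int m} \<Longrightarrow> clB b' = clB b"
proof -
  have e1: "int m+1 \<in> clB b \<longleftrightarrow> int m+1 \<in> clB b'"
    unfolding b'_def by (rule clB_restrict_mem) auto
  have e2: "-(int m+1) \<in> clB b \<longleftrightarrow> -(int m+1) \<in> clB b'"
    unfolding b'_def by (rule clB_restrict_mem) auto
  show "clB b \<subseteq> {-int m..int m} \<longleftrightarrow> clB b' \<subseteq> {-int m..int m}"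
    using clB_sub_iff[of "int m" b] clB_sub_iff[of "int m" b'] e1 e2 by simp
  assume sub: "clB b \<subseteq> {-int m..int m}"
  show "clB b' = clB b"
  proof (intro set_eqI iffI)
    fix j assume j: "j \<in> clB b'"
    have "j \<in> {min 0 j..max 0 j}" by auto
    hence "b' j" using j unfolding clB_def by (auto split: if_splits)
    hence "\<bar>j\<bar> \<le> int m + 1" unfolding b'_def by (auto split: if_splits)
    thus "j \<in> clB b" using j clB_restrict_mem[of j "int m+1" b] unfolding b'_def by auto
  next
    fix j assume j: "j \<in> clB b"
    hence "j \<in> {-int m..int m}" using sub by blast
    hence "\<bar>j\<bar> \<le> int m + 1" by (simp add: abs_le_iff)
    thus "j \<in> clB b'" using j clB_restrict_mem[of j "int m+1" b] unfolding b'_def by auto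
  qed
qed

lemma finite_pattern_sets:
  assumes fin: "finite I" and P: "\<And>i. i \<in> I \<Longrightarrow> {\<omega>\<in>space M. P i \<omega>} \<in> sets M"
  shows "{\<omega>\<in>space M. \<Phi> (\<lambda>i. if i \<in> I then P i \<omega> else False)} \<in> sets M"
proof -
  define Gs where "Gs = {g. (\<forall>i. i \<notin> I \<longrightarrow> \<not> g i) \<and> \<Phi> g}"
  have "Gs \<subseteq> (\<lambda>S i. i \<in> S) ` Pow I"
  proof
    fix g assume g: "g \<in> Gs"
    have "g = (\<lambda>i. i \<in> {i\<in>I. g i})"
    proof
      fix i show "g i = (i \<in> {i\<in>I. g i})" using g unfolding Gs_def by blast
    qed
    thus "g \<in> (\<lambda>S i. i \<in> S) ` Pow I" by blast
  qed
  hence finG: "finite Gs" using fin by (meson finite_Pow_iff finite_imageI finite_subset)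
  have eq: "{\<omega>\<in>space M. \<Phi> (\<lambda>i. if i \<in> I then P i \<omega> else False)}
     = {\<omega>\<in>space M. \<exists>g\<in>Gs. \<forall>i\<in>I. P i \<omega> = g i}"
  proof (intro set_eqI iffI)
    fix \<omega> assume w: "\<omega> \<in> {\<omega>\<in>space M. \<Phi> (\<lambda>i. if i \<in> I then P i \<omega> else False)}"
    define g where "g = (\<lambda>i. if i \<in> I then P i \<omega> else False)"
    have "g \<in> Gs" using w unfolding Gs_def g_def by simp
    moreover have "\<forall>i\<in>I. P i \<omega> = g i" unfolding g_def by simp
    ultimately show "\<omega> \<in> {\<omega>\<in>space M. \<exists>g\<in>Gs. \<forall>i\<in>I. P i \<omega> = g i}" using w by blast
  next
    fix \<omega> assume "\<omega> \<in> {\<omega>\<in>space M. \<exists>g\<in>Gs. \<forall>i\<in>I. P i \<omega> = g i}"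
    then obtain g where g: "\<omega> \<in> space M" "g \<in> Gs" "\<forall>i\<in>I. P i \<omega> = g i" by blast
    have "(\<lambda>i. if i \<in> I then P i \<omega> else False) = g"
    proof
      fix i show "(if i \<in> I then P i \<omega> else False) = g i"
        using g unfolding Gs_def by (cases "i \<in> I") auto
    qed
    moreover have "\<Phi> g" using g(2) unfolding Gs_def by blast
    ultimately show "\<omega> \<in> {\<omega>\<in>space M. \<Phi> (\<lambda>i. if i \<in> I then P i \<omega> else False)}" using g(1) by simp
  qed
  have "\<And>g i. i \<in> I \<Longrightarrow> {\<omega>\<in>space M. P i \<omega> = g i} \<in> sets M"
  proof -
    fix g i assume i: "i \<in> I"
    show "{\<omega>\<in>space M. P i \<omega> = g i} \<in> sets M"
    proof (cases "g i")
      case True thus ?thesis using P[OF i] by simp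
    next
      case False
      have "{\<omega>\<in>space M. P i \<omega> = g i} = space M - {\<omega>\<in>space M. P i \<omega>}" using False by auto
      thus ?thesis using P[OF i] by auto
    qed
  qed
  hence "{\<omega>\<in>space M. \<exists>g\<in>Gs. \<forall>i\<in>I. P i \<omega> = g i} \<in> sets M"
    by (intro sets.sets_Collect_finite_Ex finG sets.sets_Collect_finite_All fin)
  thus ?thesis using eq by simp
qed


lemma sup_countable:
  fixes f :: "real \<Rightarrow> real"
  assumes mono: "\<And>s t. 0 \<le> s \<Longrightarrow> s \<le> t \<Longrightarrow> t \<le> T \<Longrightarrow> f s \<le> f t"
    and bnd: "\<And>t. 0 \<le> f t \<and> f t \<le> 1" and T: "T > 0"
  shows "(SUP t\<in>{0..T}. \<bar>f t - min t 1\<bar>) > \<epsilon> \<longleftrightarrow>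
         (\<exists>d\<in>{0,T} \<union> (\<rat> \<inter> {0..T}). \<bar>f d - min d 1\<bar> > \<epsilon>)"
proof -
  have bdd: "bdd_above ((\<lambda>t. \<bar>f t - min t 1\<bar>) ` {0..T})"
  proof (rule bdd_aboveI[of _ 1])
    fix y assume "y \<in> (\<lambda>t. \<bar>f t - min t 1\<bar>) ` {0..T}"
    then obtain x where x: "x \<in> {0..T}" "y = \<bar>f x - min x 1\<bar>" by blast
    have "0 \<le> min x 1" "min x 1 \<le> 1" using x by auto
    thus "y \<le> 1" using bnd[of x] x(2) by linarith
  qed
  have ne: "{0..T} \<noteq> {}" using T by auto
  have lip: "\<bar>min s 1 - min t 1\<bar> \<le> \<bar>s - t\<bar>" for s t :: real by (auto simp: min_def)
  show ?thesis
  proof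
    assume "(SUP t\<in>{0..T}. \<bar>f t - min t 1\<bar>) > \<epsilon>"
    then obtain t where t: "t \<in> {0..T}" "\<bar>f t - min t 1\<bar> > \<epsilon>"
      using less_cSUP_iff[OF ne bdd] by blast
    consider "f t - min t 1 > \<epsilon>" | "min t 1 - f t > \<epsilon>" using t by linarith
    thus "\<exists>d\<in>{0,T} \<union> (\<rat> \<inter> {0..T}). \<bar>f d - min d 1\<bar> > \<epsilon>"
    proof cases
      case 1
      show ?thesis
      proof (cases "t = T")
        case True thus ?thesis using t by auto
      next
        case False
        define \<eta> where "\<eta> = f t - min t 1 - \<epsilon>"
        have "\<eta> > 0" using 1 by (simp add: \<eta>_def)
        have "t < min T (t + \<eta>)" using False t \<open>\<eta> > 0\<close> by auto
        then obtain r where r: "r \<in> \<rat>" "t < r" "r < min T (t + \<eta>)" using Rats_dense_in_real by blast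
        have "f r \<ge> f t" using r t by (intro mono) auto
        moreover have "min r 1 \<le> min t 1 + (r - t)" using lip[of r t] r by auto
        ultimately have "f r - min r 1 > \<epsilon>" using r unfolding \<eta>_def by auto
        thus ?thesis using r t by (intro bexI[of _ r]) auto
      qed
    next
      case 2
      show ?thesis
      proof (cases "t = 0")
        case True thus ?thesis using t by auto
      next
        case False
        define \<eta> where "\<eta> = min t 1 - f t - \<epsilon>"
        have "\<eta> > 0" using 2 by (simp add: \<eta>_def)
        have "max 0 (t - \<eta>) < t" using False t \<open>\<eta> > 0\<close> by auto
        then obtain r where r: "r \<in> \<rat>" "max 0 (t - \<eta>) < r" "r < t" using Rats_dense_in_real by blast
        have "f r \<le> f t" using r t by (intro mono) auto
        moreover have "min r 1 \<ge> min t 1 - (t - r)" using lip[of r t] r by auto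
        ultimately have "min r 1 - f r > \<epsilon>" using r unfolding \<eta>_def by auto
        thus ?thesis using r t by (intro bexI[of _ r]) auto
      qed
    qed
  next
    assume "\<exists>d\<in>{0,T} \<union> (\<rat> \<inter> {0..T}). \<bar>f d - min d 1\<bar> > \<epsilon>"
    then obtain d where d0: "d \<in> {0,T} \<union> (\<rat> \<inter> {0..T})" "\<bar>f d - min d 1\<bar> > \<epsilon>" by blast
    have d: "d \<in> {0..T}" "\<bar>f d - min d 1\<bar> > \<epsilon>" using d0 T by auto
    have "\<bar>f d - min d 1\<bar> \<le> (SUP t\<in>{0..T}. \<bar>f t - min t 1\<bar>)"
      by (rule cSUP_upper[OF d(1) bdd])
    thus "(SUP t\<in>{0..T}. \<bar>f t - min t 1\<bar>) > \<epsilon>" using d by linarith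
  qed
qed

definition pat :: "(int \<Rightarrow> 'a \<Rightarrow> real) \<Rightarrow> (int \<Rightarrow> nat \<Rightarrow> 'a \<Rightarrow> real) \<Rightarrow> real \<Rightarrow> real \<Rightarrow> int set \<Rightarrow> 'a \<Rightarrow> int \<Rightarrow> bool" where
  "pat T1 X c t I \<omega> = (\<lambda>i. if i \<in> I then occ T1 X c t i \<omega> else False)"

definition Upat :: "real measure \<Rightarrow> real \<Rightarrow> nat \<Rightarrow> (int \<Rightarrow> bool) \<Rightarrow> real" where
  "Upat nu c n g = real_of_ereal (min (psi_of nu (real (card {i\<in>{-int n..int n}. g i}) / real (2*n+1)) / ereal c) 1)"

lemma U_pat: "U_proc nu T1 X c n t \<omega> = Upat nu c n (pat T1 X c t {-int n..int n} \<omega>)"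
proof -
  have "{i\<in>{-int n..int n}. zeta T1 X c t i \<omega> > 0} = {i\<in>{-int n..int n}. pat T1 X c t {-int n..int n} \<omega> i}"
    by (auto simp: zeta_occ pat_def)
  thus ?thesis by (simp add: U_proc_def K_frac_def Upat_def)
qed

definition Vf :: "real measure \<Rightarrow> real \<Rightarrow> int set \<Rightarrow> real" where
  "Vf nu c C = real_of_ereal (min (if C = {} then 0
        else psi_of nu (if finite C then 1 - 1 / real (card C) else 1) / ereal c) 1)"

lemma V_Vf: "V_proc nu T1 X c t \<omega> = Vf nu c (C_clus T1 X c t \<omega>)"
  by (simp add: V_proc_def Vf_def Let_def)

context SR begin

lemma occ_sets: "{\<omega>\<in>space M. occ T1 X c t i \<omega>} \<in> sets M"
proof -
  have "{\<omega>\<in>space M. occ T1 X c t i \<omega>} =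
     {\<omega>\<in>space M. \<exists>k::nat. 1 \<le> k \<and> T1 i \<omega> + (\<Sum>j\<in>{1..<k}. X i j \<omega>) \<le> c * t}"
    by (auto simp: occ_def sr_time_def)
  also have "\<dots> \<in> sets M"
  proof (intro sets.sets_Collect_countable_Ex)
    fix k :: nat
    show "{\<omega>\<in>space M. 1 \<le> k \<and> T1 i \<omega> + (\<Sum>j\<in>{1..<k}. X i j \<omega>) \<le> c * t} \<in> sets M"
    proof (cases "1 \<le> k")
      case True
      have [measurable]: "(\<lambda>\<omega>. T1 i \<omega> + (\<Sum>j\<in>{1..<k}. X i j \<omega>)) \<in> borel_measurable M"
        by (intro borel_measurable_add rv_T1 borel_measurable_sum rv_X) auto
      have "{\<omega>\<in>space M. T1 i \<omega> + (\<Sum>j\<in>{1..<k}. X i j \<omega>) \<le> c * t} \<in> sets M" by measurable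
      thus ?thesis using True by simp
    qed simp
  qed
  finally show ?thesis .
qed

lemma pat_sets: "finite I \<Longrightarrow> {\<omega>\<in>space M. \<Phi> (pat T1 X c t I \<omega>)} \<in> sets M"
  unfolding pat_def by (rule finite_pattern_sets) (auto intro: occ_sets)

lemma U_sets: "{\<omega>\<in>space M. P (U_proc nu T1 X c n t \<omega>)} \<in> sets M"
  unfolding U_pat by (rule pat_sets[where \<Phi>="\<lambda>g. P (Upat nu c n g)"]) simp

lemma div_nonneg_e: "c > 0 \<Longrightarrow> 0 \<le> psi_of nu u / ereal c"
  using ereal_divide_right_mono[OF psi_nonneg[of u], of "ereal c"] by simp

lemma realmin_bounds: "0 \<le> (x::ereal) \<Longrightarrow> 0 \<le> real_of_ereal (min x 1) \<and> real_of_ereal (min x 1) \<le> 1"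
  using real_of_ereal_positive_mono[of "min x 1" 1] by (auto simp: real_of_ereal_pos)

lemma U_bounds: "c > 0 \<Longrightarrow> 0 \<le> U_proc nu T1 X c n t \<omega> \<and> U_proc nu T1 X c n t \<omega> \<le> 1"
  unfolding U_proc_def by (intro realmin_bounds div_nonneg_e)

lemma realmin_mono: "0 \<le> (x::ereal) \<Longrightarrow> x \<le> y \<Longrightarrow> real_of_ereal (min x 1) \<le> real_of_ereal (min y 1)"
  by (rule real_of_ereal_positive_mono) (auto simp: min_def)

lemma U_mono: "c > 0 \<Longrightarrow> t \<le> t' \<Longrightarrow> U_proc nu T1 X c n t \<omega> \<le> U_proc nu T1 X c n t' \<omega>"
proof -
  assume c: "c > 0" and tt: "t \<le> t'"
  have "card {i\<in>{-int n..int n}. zeta T1 X c t i \<omega> > 0} \<le> card {i\<in>{-int n..int n}. zeta T1 X c t' i \<omega> > 0}"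
    by (rule card_mono[OF finite_subset[OF _ finite_atLeastAtMost_int]]) (auto simp: zeta_occ intro: occ_mono[OF c tt])
  hence "K_frac T1 X c n t \<omega> \<le> K_frac T1 X c n t' \<omega>"
    unfolding K_frac_def by (intro divide_right_mono) auto
  hence "psi_of nu (K_frac T1 X c n t \<omega>) \<le> psi_of nu (K_frac T1 X c n t' \<omega>)" by (rule psi_mono)
  hence "psi_of nu (K_frac T1 X c n t \<omega>) / ereal c \<le> psi_of nu (K_frac T1 X c n t' \<omega>) / ereal c"
    using c by (intro ereal_divide_right_mono) auto
  thus ?thesis unfolding U_proc_def by (intro realmin_mono div_nonneg_e c)
qed

lemma set_i_sets:
  assumes c: "c > 0" and T: "T > 0"
  shows "{\<omega>\<in>space M. (SUP t\<in>{0..T}. \<bar>U_proc nu T1 X c n t \<omega> - min t 1\<bar>) > \<epsilon>} \<in> sets M"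
proof -
  have "{\<omega>\<in>space M. (SUP t\<in>{0..T}. \<bar>U_proc nu T1 X c n t \<omega> - min t 1\<bar>) > \<epsilon>} =
        {\<omega>\<in>space M. \<exists>d\<in>{0,T} \<union> (\<rat> \<inter> {0..T}). \<bar>U_proc nu T1 X c n d \<omega> - min d 1\<bar> > \<epsilon>}"
    using sup_countable[OF U_mono[OF c] U_bounds[OF c] T] by auto
  also have "\<dots> \<in> sets M"
    by (intro sets.sets_Collect_countable_Ex' U_sets) (auto intro: countable_rat)
  finally show ?thesis .
qed

lemma set_ii_sets:
  "{\<omega>\<in>space M. C_clus T1 X c t \<omega> \<subseteq> {- int n..int n} \<and> \<bar>V_proc nu T1 X c t \<omega> - t\<bar> < \<epsilon>} \<in> sets M"
proof -
  define I where "I = {-(int n+1)..int n+1}"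
  have "{\<omega>\<in>space M. C_clus T1 X c t \<omega> \<subseteq> {- int n..int n} \<and> \<bar>V_proc nu T1 X c t \<omega> - t\<bar> < \<epsilon>}
    = {\<omega>\<in>space M. (\<lambda>g. clB g \<subseteq> {- int n..int n} \<and> \<bar>Vf nu c (clB g) - t\<bar> < \<epsilon>) (pat T1 X c t I \<omega>)}"
  proof -
    have key: "(C_clus T1 X c t \<omega> \<subseteq> {- int n..int n} \<and> \<bar>V_proc nu T1 X c t \<omega> - t\<bar> < \<epsilon>) =
      (clB (pat T1 X c t I \<omega>) \<subseteq> {- int n..int n} \<and> \<bar>Vf nu c (clB (pat T1 X c t I \<omega>)) - t\<bar> < \<epsilon>)" for \<omega>
    proof -
    let ?b = "\<lambda>i. occ T1 X c t i \<omega>"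
    have pb: "pat T1 X c t I \<omega> = (\<lambda>i. if i \<in> {-(int n+1)..int n+1} then ?b i else False)"
      by (simp add: pat_def I_def)
    show ?thesis
    proof (cases "clB ?b \<subseteq> {-int n..int n}")
      case True
      have "clB (pat T1 X c t I \<omega>) = clB ?b" unfolding pb by (rule clB_restrict(2)[OF True])
      thus ?thesis using True unfolding V_Vf C_clus_occ by simp
    next
      case False
      have "\<not> clB (pat T1 X c t I \<omega>) \<subseteq> {-int n..int n}" unfolding pb using clB_restrict(1)[of ?b n] False by simp
      thus ?thesis using False unfolding V_Vf C_clus_occ by simp
    qed
    qed
    thus ?thesis by (simp only: key)
  qed
  also have "\<dots> \<in> sets M" by (rule pat_sets) (simp add: I_def)
  finally show ?thesis .
qed

end

lemma (in prob_space) cheb_count: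
  fixes I :: "'i set" and A :: "'i \<Rightarrow> 'a set"
  assumes fin: "finite I" and ev: "\<And>i. i\<in>I \<Longrightarrow> A i \<in> events"
    and pq: "\<And>i. i\<in>I \<Longrightarrow> prob (A i) = q"
    and pw: "\<And>i j. i\<in>I \<Longrightarrow> j\<in>I \<Longrightarrow> i\<noteq>j \<Longrightarrow> prob (A i \<inter> A j) = q^2"
    and r: "r > 0"
  shows "prob {\<omega>\<in>space M. \<bar>(\<Sum>i\<in>I. indicator (A i) \<omega>) - real (card I) * q\<bar> \<ge> r} \<le> real (card I) * q / r^2"
proof -
  define Z where "Z = (\<lambda>\<omega>. \<Sum>i\<in>I. indicator (A i) \<omega> :: real)"
  have ind_int: "integrable M (indicator B :: 'a \<Rightarrow> real)" if "B \<in> events" for B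
    using integrable_indicator[of B M "1::real"] that by (simp add: emeasure_eq_measure)
  have Zm[measurable]: "Z \<in> borel_measurable M" unfolding Z_def
    by (intro borel_measurable_sum borel_measurable_indicator ev)
  have prod_ind: "indicator (A i) \<omega> * indicator (A j) \<omega> = (indicator (A i \<inter> A j) \<omega> :: real)" for i j \<omega>
    by (simp add: indicator_def)
  have Z2: "(Z \<omega>)\<^sup>2 = (\<Sum>i\<in>I. \<Sum>j\<in>I. indicator (A i \<inter> A j) \<omega>)" for \<omega>
    unfolding Z_def power2_eq_square sum_product prod_ind ..
  have intZ2: "integrable M (\<lambda>\<omega>. (Z \<omega>)\<^sup>2)" unfolding Z2
    by (intro Bochner_Integration.integrable_sum ind_int) (auto intro!: sets.Int ev)
  have intZ: "integrable M Z" unfolding Z_def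
    by (intro Bochner_Integration.integrable_sum ind_int) (auto intro: ev)
  have mA: "measure M (A i \<inter> space M) = q" if "i \<in> I" for i
    using pq[OF that] ev[OF that] sets.sets_into_space by (simp add: Int_absorb2)
  have "expectation Z = (\<Sum>i\<in>I. measure M (A i \<inter> space M))"
    unfolding Z_def using ev by (subst Bochner_Integration.integral_sum) (auto intro: ind_int)
  also have "\<dots> = (\<Sum>i\<in>I. q)" by (rule sum.cong) (auto simp: mA)
  finally have EZ: "expectation Z = real (card I) * q" by simp
  have inner: "(\<Sum>j\<in>I. measure M (A i \<inter> A j \<inter> space M)) = q + (real (card I) - 1) * q^2" if i: "i \<in> I" for i
  proof -
    have "(\<Sum>j\<in>I. measure M (A i \<inter> A j \<inter> space M)) = measure M (A i \<inter> A i \<inter> space M) + (\<Sum>j\<in>I-{i}. measure M (A i \<inter> A j \<inter> space M))"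
      using fin i by (rule sum.remove)
    also have "measure M (A i \<inter> A i \<inter> space M) = q" using mA[OF i] by simp
    also have "(\<Sum>j\<in>I-{i}. measure M (A i \<inter> A j \<inter> space M)) = (\<Sum>j\<in>I-{i}. q^2)"
    proof (rule sum.cong)
      fix j assume j: "j \<in> I - {i}"
      have "A i \<inter> A j \<subseteq> space M" using ev[OF i] sets.sets_into_space by blast
      hence "A i \<inter> A j \<inter> space M = A i \<inter> A j" by blast
      thus "measure M (A i \<inter> A j \<inter> space M) = q^2" using pw[OF i] j by auto
    qed simp
    also have "\<dots> = (real (card I) - 1) * q^2"
    proof -
      have "card I \<ge> 1" using fin i by (metis One_nat_def Suc_leI card_gt_0_iff empty_iff)
      thus ?thesis using fin i by (simp add: card_Diff_singleton of_nat_diff)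
    qed
    finally show ?thesis .
  qed
  have int2: "integrable M (\<lambda>\<omega>. indicator (A i \<inter> A j) \<omega> :: real)" if "i \<in> I" "j \<in> I" for i j
    using that by (intro ind_int sets.Int ev)
  have "expectation (\<lambda>\<omega>. (Z \<omega>)\<^sup>2) = (\<Sum>i\<in>I. expectation (\<lambda>\<omega>. \<Sum>j\<in>I. indicator (A i \<inter> A j) \<omega>))"
    unfolding Z2 by (rule Bochner_Integration.integral_sum) (rule Bochner_Integration.integrable_sum, rule int2)
  also have "\<dots> = (\<Sum>i\<in>I. \<Sum>j\<in>I. measure M (A i \<inter> A j \<inter> space M))"
  proof (rule sum.cong[OF refl])
    fix i assume i: "i \<in> I"
    show "expectation (\<lambda>\<omega>. \<Sum>j\<in>I. indicator (A i \<inter> A j) \<omega>) = (\<Sum>j\<in>I. measure M (A i \<inter> A j \<inter> space M))"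
      by (subst Bochner_Integration.integral_sum) (auto intro: int2[OF i])
  qed
  also have "\<dots> = (\<Sum>i\<in>I. q + (real (card I) - 1) * q^2)" by (rule sum.cong[OF refl]) (rule inner)
  finally have EZ2: "expectation (\<lambda>\<omega>. (Z \<omega>)\<^sup>2) = real (card I) * (q + (real (card I) - 1) * q^2)" by simp
  have var: "variance Z \<le> real (card I) * q"
  proof -
    have "variance Z = real (card I) * (q + (real (card I) - 1) * q^2) - (real (card I) * q)^2"
      using variance_eq[OF intZ intZ2] EZ EZ2 by simp
    also have "\<dots> = real (card I) * q - real (card I) * q^2" by (simp add: algebra_simps power2_eq_square)
    also have "\<dots> \<le> real (card I) * q" by simp
    finally show ?thesis .
  qed
  have "prob {\<omega>\<in>space M. \<bar>Z \<omega> - expectation Z\<bar> \<ge> r} \<le> variance Z / r\<^sup>2"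
    by (rule Chebyshev_inequality[OF Zm intZ2 r])
  also have "\<dots> \<le> real (card I) * q / r^2" using var r by (intro divide_right_mono) auto
  finally show ?thesis unfolding EZ by (simp add: Z_def)
qed

context SR begin

lemma X_pos_AE: "AE \<omega> in M. \<forall>i k. k \<ge> 1 \<longrightarrow> X i k \<omega> \<ge> 0"
proof -
  interpret mu: prob_space muS by (rule mu_prob)
  have "AE \<omega> in M. X i k \<omega> \<ge> 0" if k: "k \<ge> 1" for i k
  proof -
    have eq: "distr M borel (X i k) = muS" using X_distr k by blast
    have "AE x in distr M borel (X i k). x \<in> {0<..}" unfolding eq using mu_pos by (intro mu.AE_prob_1) simp
    hence "AE \<omega> in M. X i k \<omega> \<in> {0<..}" by (rule AE_distrD[OF rv_X[OF k]])
    thus ?thesis by eventually_elim auto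
  qed
  thus ?thesis by (auto simp: AE_all_countable)
qed

lemma indep_T1:
  assumes fin: "finite J" and ne: "J \<noteq> {}" and A: "\<And>i. i \<in> J \<Longrightarrow> B i \<in> sets borel"
  shows "prob (\<Inter>i\<in>J. {\<omega>\<in>space M. T1 i \<omega> \<in> B i}) = (\<Prod>i\<in>J. prob {\<omega>\<in>space M. T1 i \<omega> \<in> B i})"
proof -
  let ?Y = "\<lambda>p. case p of (i, 0) \<Rightarrow> T1 i | (i, Suc k) \<Rightarrow> X i (Suc k)"
  have isd: "indep_sets (\<lambda>p. {?Y p -` A \<inter> space M | A. A \<in> sets borel}) UNIV"
    using indep unfolding indep_vars_def2 by blast
  define A' where "A' = (\<lambda>p::int\<times>nat. {\<omega>\<in>space M. T1 (fst p) \<omega> \<in> B (fst p)})"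
  have "prob (\<Inter>p\<in>(\<lambda>i. (i,0::nat)) ` J. A' p) = (\<Prod>p\<in>(\<lambda>i. (i,0::nat)) ` J. prob (A' p))"
  proof (rule indep_setsD[OF isd])
    show "\<forall>j\<in>(\<lambda>i. (i, 0::nat)) ` J. A' j \<in> {?Y j -` A \<inter> space M |A. A \<in> sets borel}"
    proof
      fix p assume "p \<in> (\<lambda>i. (i, 0::nat)) ` J"
      then obtain i where i: "i \<in> J" "p = (i,0)" by blast
      show "A' p \<in> {?Y p -` A \<inter> space M |A. A \<in> sets borel}"
        using i A[OF i(1)] by (auto simp: A'_def)
    qed
  qed (use fin ne in auto)
  moreover have "inj_on (\<lambda>i. (i,0::nat)) J" by (auto simp: inj_on_def)
  ultimately show ?thesis by (simp add: prod.reindex A'_def)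
qed

lemma prob_gt: "prob {\<omega>\<in>space M. T1 i \<omega> > x} = G x"
  using T1_prob[of "{x<..}" i] by (simp add: G_def)

lemma prob_le: "prob {\<omega>\<in>space M. T1 i \<omega> \<le> x} = 1 - G x"
proof -
  have "prob {\<omega>\<in>space M. T1 i \<omega> \<le> x} = prob (space M - {\<omega>\<in>space M. T1 i \<omega> > x})"
    by (intro arg_cong[where f=prob]) auto
  also have "\<dots> = 1 - prob {\<omega>\<in>space M. T1 i \<omega> > x}" by (rule prob_compl) measurable
  finally show ?thesis using prob_gt by simp
qed

lemma prob_all_le: "finite J \<Longrightarrow> prob (\<Inter>i\<in>J. {\<omega>\<in>space M. T1 i \<omega> \<le> x}) \<le> (1 - G x) ^ card J"
proof -
  assume fin: "finite J"
  show ?thesis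
  proof (cases "J = {}")
    case True thus ?thesis by simp
  next
    case False
    have "prob (\<Inter>i\<in>J. {\<omega>\<in>space M. T1 i \<omega> \<in> {..x}}) = (\<Prod>i\<in>J. prob {\<omega>\<in>space M. T1 i \<omega> \<in> {..x}})"
      by (rule indep_T1[OF fin False]) simp
    thus ?thesis using prob_le by simp
  qed
qed

lemma prob_pair_gt: "i \<noteq> j \<Longrightarrow> prob ({\<omega>\<in>space M. T1 i \<omega> > x} \<inter> {\<omega>\<in>space M. T1 j \<omega> > x}) = (G x)^2"
proof -
  assume ij: "i \<noteq> j"
  have "prob (\<Inter>k\<in>{i,j}. {\<omega>\<in>space M. T1 k \<omega> \<in> {x<..}}) = (\<Prod>k\<in>{i,j}. prob {\<omega>\<in>space M. T1 k \<omega> \<in> {x<..}})"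
    by (rule indep_T1) auto
  thus ?thesis using ij prob_gt by (simp add: power2_eq_square)
qed

end

lemma sum_ind_card: "finite I \<Longrightarrow> (\<Sum>i\<in>I. indicator (A i) \<omega> :: real) = real (card {i\<in>I. \<omega> \<in> A i})"
proof -
  assume fin: "finite I"
  have "(\<Sum>i\<in>I. indicator (A i) \<omega> :: real) = (\<Sum>i\<in>I. if \<omega> \<in> A i then 1 else 0)"
    by (rule sum.cong) (auto simp: indicator_def)
  also have "\<dots> = (\<Sum>i\<in>{i\<in>I. \<omega> \<in> A i}. 1)" using sum.inter_filter[OF fin, of "\<lambda>_. 1::real" "\<lambda>i. \<omega> \<in> A i"] by simp
  finally show ?thesis by simp
qed

lemma card_split: "finite I \<Longrightarrow> card {i\<in>I. P i} + card {i\<in>I. \<not> P i} = card I"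
proof -
  assume fin: "finite I"
  have "card ({i\<in>I. P i} \<union> {i\<in>I. \<not> P i}) = card {i\<in>I. P i} + card {i\<in>I. \<not> P i}"
    using fin by (intro card_Un_disjoint) auto
  moreover have "{i\<in>I. P i} \<union> {i\<in>I. \<not> P i} = I" by auto
  ultimately show ?thesis by simp
qed

context SR begin

definition Uf where "Uf c kk = real_of_ereal (min (psi_of nu kk / ereal c) 1)"

lemma U_Uf: "U_proc nu T1 X c n t \<omega> = Uf c (K_frac T1 X c n t \<omega>)"
  by (simp add: U_proc_def Uf_def)

lemma Uf_upper: "c > 0 \<Longrightarrow> s > 0 \<Longrightarrow> kk \<le> F (c * s) \<Longrightarrow> Uf c kk \<le> s"
proof -
  assume c: "c > 0" and s: "s > 0" and kk: "kk \<le> F (c * s)"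
  have p: "psi_of nu kk \<le> ereal (c * s)" using psi_le_iff[of "c * s" kk] c s kk by simp
  have "psi_of nu kk / ereal c \<le> ereal s"
  proof (cases "psi_of nu kk")
    case (real r)
    hence "r \<le> c * s" using p by simp
    hence "r / c \<le> s" using c by (simp add: divide_le_eq mult.commute)
    thus ?thesis using real c by simp
  qed (use p c psi_nonneg[of kk] in auto)
  hence "min (psi_of nu kk / ereal c) 1 \<le> ereal s" by (simp add: min.coboundedI1)
  hence "real_of_ereal (min (psi_of nu kk / ereal c) 1) \<le> real_of_ereal (ereal s)"
    by (intro real_of_ereal_positive_mono) (auto intro: div_nonneg_e c)
  thus ?thesis by (simp add: Uf_def)
qed

lemma Uf_lower: "c > 0 \<Longrightarrow> s > 0 \<Longrightarrow> s < 1 \<Longrightarrow> kk > F (c * s) \<Longrightarrow> Uf c kk > s"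
proof -
  assume c: "c > 0" and s: "s > 0" "s < 1" and kk: "kk > F (c * s)"
  have p: "\<not> psi_of nu kk \<le> ereal (c * s)" using psi_le_iff[of "c * s" kk] c s kk by simp
  have x: "psi_of nu kk / ereal c > ereal s"
  proof (cases "psi_of nu kk")
    case (real r)
    hence "r > c * s" using p by simp
    hence "r / c > s" using c by (simp add: less_divide_eq mult.commute)
    thus ?thesis using real c by simp
  next
    case PInf thus ?thesis using c by simp
  next
    case MInf thus ?thesis using psi_nonneg[of kk] by simp
  qed
  have "min (psi_of nu kk / ereal c) 1 > ereal s" using x s by simp
  moreover have "min (psi_of nu kk / ereal c) 1 \<le> 1" by simp
  ultimately obtain y where "min (psi_of nu kk / ereal c) 1 = ereal y" "y > s"
    by (cases "min (psi_of nu kk / ereal c) 1") auto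
  thus ?thesis by (simp add: Uf_def)
qed

lemma Kclean:
  assumes cl: "\<forall>i k. k \<ge> 1 \<longrightarrow> X i k \<omega> \<ge> 0"
  shows "K_frac T1 X c n t \<omega> = (real (2*n+1) - real (card {i\<in>{-int n..int n}. T1 i \<omega> > c * t})) / real (2*n+1)"
proof -
  have "{i\<in>{-int n..int n}. zeta T1 X c t i \<omega> > 0} = {i\<in>{-int n..int n}. T1 i \<omega> \<le> c * t}"
    using occ_clean[of X _ \<omega> T1 c t] cl by (auto simp: zeta_occ)
  moreover have "card {i\<in>{-int n..int n}. T1 i \<omega> \<le> c * t} + card {i\<in>{-int n..int n}. \<not> T1 i \<omega> \<le> c * t} = 2*n+1"
    using card_split[of "{-int n..int n}" "\<lambda>i. T1 i \<omega> \<le> c * t"] by simp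
  ultimately show ?thesis unfolding K_frac_def by (simp add: not_le)
qed

lemma parti_point:
  fixes c t \<delta> :: real and n :: nat
  defines "q \<equiv> G (c * t)" and "s \<equiv> t + \<delta>/2" and "s' \<equiv> max (t/2) (t - \<delta>/2)" and "N \<equiv> real (2*n+1)"
  assumes c: "c > 0" and t: "0 < t" "t < 1" and \<delta>: "\<delta> > 0"
    and gs: "G (c * s) < q" and gs': "q < G (c * s')"
  shows "prob {\<omega>\<in>space M. \<bar>U_proc nu T1 X c n t \<omega> - t\<bar> \<ge> \<delta>}
     \<le> N*q / (N * (q - G (c * s)))^2 + N*q / (N * (G (c * s') - q))^2"
proof -
  define I where "I = {-int n..int n}"
  define A where "A = (\<lambda>i. {\<omega>\<in>space M. T1 i \<omega> > c * t})"
  define Z where "Z = (\<lambda>\<omega>. \<Sum>i\<in>I. indicator (A i) \<omega> :: real)"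
  have cardI: "real (card I) = N" by (simp add: I_def N_def)
  have N: "N > 0" by (simp add: N_def)
  have ev: "A i \<in> events" for i unfolding A_def by measurable
  have Zm[measurable]: "Z \<in> borel_measurable M" unfolding Z_def by (intro borel_measurable_sum borel_measurable_indicator ev)
  have r1: "N * (q - G (c * s)) > 0" using N gs by simp
  have r2: "N * (G (c * s') - q) > 0" using N gs' by simp
  define B1 where "B1 = {\<omega>\<in>space M. \<bar>Z \<omega> - N * q\<bar> \<ge> N * (q - G (c * s))}"
  define B2 where "B2 = {\<omega>\<in>space M. \<bar>Z \<omega> - N * q\<bar> \<ge> N * (G (c * s') - q)}"
  have B1m: "B1 \<in> events" unfolding B1_def by measurable
  have B2m: "B2 \<in> events" unfolding B2_def by measurable
  have cheb: "prob {\<omega>\<in>space M. \<bar>Z \<omega> - N * q\<bar> \<ge> r} \<le> N * q / r^2" if "r > 0" for r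
    using cheb_count[of I A q r] unfolding Z_def cardI[symmetric]
    by (auto simp: I_def ev A_def prob_gt q_def prob_pair_gt that)
  have incl: "AE \<omega> in M. \<omega> \<in> {\<omega>\<in>space M. \<bar>U_proc nu T1 X c n t \<omega> - t\<bar> \<ge> \<delta>} \<longrightarrow> \<omega> \<in> B1 \<union> B2"
    using X_pos_AE
  proof eventually_elim
    fix \<omega> assume cl: "\<forall>i k. k \<ge> 1 \<longrightarrow> X i k \<omega> \<ge> 0"
    show "\<omega> \<in> {\<omega>\<in>space M. \<bar>U_proc nu T1 X c n t \<omega> - t\<bar> \<ge> \<delta>} \<longrightarrow> \<omega> \<in> B1 \<union> B2"
    proof
      assume w: "\<omega> \<in> {\<omega>\<in>space M. \<bar>U_proc nu T1 X c n t \<omega> - t\<bar> \<ge> \<delta>}"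
      have Zw: "Z \<omega> = real (card {i\<in>I. T1 i \<omega> > c * t})"
        unfolding Z_def using w by (subst sum_ind_card) (auto simp: I_def A_def)
      have kk: "K_frac T1 X c n t \<omega> = (N - Z \<omega>) / N"
        using Kclean[OF cl, of c n t] Zw by (simp add: N_def I_def)
      have s_pos: "s > 0" using t \<delta> by (simp add: s_def)
      have s'_pos: "s' > 0" "s' < 1" using t \<delta> by (auto simp: s'_def)
      have Fcs: "F (c * s) = 1 - G (c * s)" using FG[of "c * s"] c s_pos by simp
      have Fcs': "F (c * s') = 1 - G (c * s')" using FG[of "c * s'"] c s'_pos by simp
      consider "Z \<omega> < N * G (c * s)" | "Z \<omega> \<ge> N * G (c * s')" | "Z \<omega> \<ge> N * G (c * s)" "Z \<omega> < N * G (c * s')" by linarith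
      thus "\<omega> \<in> B1 \<union> B2"
      proof cases
        case 1 thus ?thesis using w gs unfolding B1_def by (auto simp: abs_if algebra_simps)
      next
        case 2 thus ?thesis using w gs' unfolding B2_def by (auto simp: abs_if algebra_simps)
      next
        case 3
        have KK: "(N - Z \<omega>) / N = 1 - Z \<omega> / N" using N by (simp add: field_simps)
        have g1: "G (c * s) \<le> Z \<omega> / N" using 3 N by (simp add: le_divide_eq mult.commute)
        have g2: "Z \<omega> / N < G (c * s')" using 3 N by (simp add: divide_less_eq mult.commute)
        have "K_frac T1 X c n t \<omega> \<le> F (c * s)"
          unfolding kk Fcs KK using g1 by simp
        hence u1: "U_proc nu T1 X c n t \<omega> \<le> s" unfolding U_Uf by (intro Uf_upper c s_pos)
        have "K_frac T1 X c n t \<omega> > F (c * s')"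
          unfolding kk Fcs' KK using g2 by simp
        hence u2: "U_proc nu T1 X c n t \<omega> > s'" unfolding U_Uf by (intro Uf_lower c s'_pos)
        have "\<bar>U_proc nu T1 X c n t \<omega> - t\<bar> < \<delta>" using u1 u2 \<delta> unfolding s_def s'_def by (auto simp: abs_if)
        thus ?thesis using w by simp
      qed
    qed
  qed
  have "prob {\<omega>\<in>space M. \<bar>U_proc nu T1 X c n t \<omega> - t\<bar> \<ge> \<delta>} \<le> prob (B1 \<union> B2)"
    by (rule finite_measure_mono_AE[OF incl]) (use B1m B2m in auto)
  also have "\<dots> \<le> prob B1 + prob B2" by (rule measure_Un_le[OF B1m B2m])
  also have "\<dots> \<le> N*q / (N * (q - G (c * s)))^2 + N*q / (N * (G (c * s') - q))^2"
    unfolding B1_def B2_def by (intro add_mono cheb r1 r2)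
  finally show ?thesis .
qed

end

lemma grid:
  fixes f :: "real \<Rightarrow> real" and K :: nat
  assumes mono: "\<And>s t. s \<le> t \<Longrightarrow> f s \<le> f t"
    and bnd: "\<And>t. 0 \<le> f t \<and> f t \<le> 1" and K: "K \<ge> 2" and Kd: "1 / real K \<le> \<delta>"
    and good: "\<forall>j\<in>{1..K-1}. \<bar>f (real j / real K) - real j / real K\<bar> < \<delta>"
    and t: "0 \<le> t"
  shows "\<bar>f t - min t 1\<bar> < 2*\<delta>"
proof -
  have Kp: "real K > 0" using K by simp
  have dp: "\<delta> > 0" using Kd Kp by (meson divide_pos_pos less_le_trans zero_less_one)
  have gK: "real (K-1) / real K = 1 - 1 / real K" using K Kp by (simp add: of_nat_diff field_simps)
  show ?thesis
  proof (cases "t \<ge> real (K-1) / real K")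
    case True
    have "K - 1 \<in> {1..K-1}" using K by auto
    hence gd: "\<bar>f (real (K-1) / real K) - real (K-1) / real K\<bar> < \<delta>" using good by blast
    have "f t \<ge> f (real (K-1) / real K)" using True by (intro mono)
    hence lo: "f t > 1 - 1 / real K - \<delta>" using gd gK by auto
    have "min t 1 \<ge> 1 - 1 / real K" using True gK Kp by (auto simp: min_def)
    moreover have "min t 1 \<le> 1" by simp
    ultimately show ?thesis using lo bnd[of t] Kd dp by (auto simp: abs_if)
  next
    case False
    have t1: "t < 1" using False gK Kp by (smt (verit) divide_pos_pos)
    define j where "j = nat \<lfloor>t * real K\<rfloor>"
    have tK: "t * real K \<ge> 0" using t Kp by simp
    have j1: "real j \<le> t * real K" unfolding j_def using tK by (simp add: of_nat_nat)
    have j2: "t * real K < real j + 1" unfolding j_def using tK by (simp add: of_nat_nat)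
    have "t * real K < real (K-1)" using False Kp by (simp add: field_simps)
    hence "real j < real (K - 1)" using j1 by linarith
    hence jK: "j + 1 \<in> {1..K-1}" by auto
    have gj1: "real j / real K \<le> t" using j1 Kp by (simp add: divide_le_eq mult.commute)
    have gj2: "t < real (j+1) / real K" using j2 Kp by (simp add: less_divide_eq mult.commute)
    have step: "real (j+1) / real K = real j / real K + 1 / real K" by (simp add: add_divide_distrib)
    have "f t \<le> f (real (j+1) / real K)" using gj2 by (intro mono) simp
    moreover have "\<bar>f (real (j+1) / real K) - real (j+1) / real K\<bar> < \<delta>" using good jK by blast
    ultimately have up: "f t < t + 2*\<delta>" using step gj1 Kd by auto
    have lo: "f t > t - 2*\<delta>"
    proof (cases "j = 0")
      case True
      hence "t < 1 / real K" using gj2 by simp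
      thus ?thesis using bnd[of t] Kd dp by linarith
    next
      case False
      hence "j \<in> {1..K-1}" using jK by auto
      hence "\<bar>f (real j / real K) - real j / real K\<bar> < \<delta>" using good by blast
      moreover have "f t \<ge> f (real j / real K)" using gj1 by (intro mono)
      ultimately show ?thesis using gj2 step Kd by auto
    qed
    show ?thesis using up lo t1 by (simp add: abs_if min_def)
  qed
qed

context SR begin

lemma Nq_inf: "0 \<le> t \<Longrightarrow> t < 1 \<Longrightarrow> filterlim (\<lambda>l. real (2 * m l + 1) * G (a l * t)) at_top (at_right 0)"
proof -
  assume t: "0 \<le> t" "t < 1"
  have "filterlim (\<lambda>l. real (m l) * G (a l * t)) at_top (at_right 0)"
    using m_nu t by (simp add: G_def)
  moreover have "eventually (\<lambda>l. real (m l) * G (a l * t) \<le> real (2 * m l + 1) * G (a l * t)) (at_right 0)"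
    by (intro always_eventually allI mult_right_mono) (auto simp: G_nonneg)
  ultimately show ?thesis by (rule filterlim_at_top_mono)
qed

lemma parti_lim:
  assumes t: "0 < t" "t < 1" and \<delta>: "\<delta> > 0"
  shows "((\<lambda>l. prob {\<omega>\<in>space M. \<bar>U_proc nu T1 X (a l) (m l) t \<omega> - t\<bar> \<ge> \<delta>}) \<longlongrightarrow> 0) (at_right 0)"
proof -
  define s where "s = t + \<delta>/2"
  define s' where "s' = max (t/2) (t - \<delta>/2)"
  have ss: "0 < s'" "s' < t" "t < s" using t \<delta> by (auto simp: s_def s'_def)
  define q where "q = (\<lambda>l. G (a l * t))"
  define N where "N = (\<lambda>l. real (2 * m l + 1))"
  define R1 where "R1 = (\<lambda>l. G (a l * s) / q l)"
  define R2 where "R2 = (\<lambda>l. q l / G (a l * s'))"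
  have R1: "(R1 \<longlongrightarrow> 0) (at_right 0)" unfolding R1_def q_def using ratio_0[of t s] ss t by simp
  have R2: "(R2 \<longlongrightarrow> 0) (at_right 0)" unfolding R2_def q_def using ratio_0[of s' t] ss by simp
  have Nq: "((\<lambda>l. inverse (N l * q l)) \<longlongrightarrow> 0) (at_right 0)"
    unfolding N_def q_def by (rule tendsto_inverse_0_at_top[OF Nq_inf]) (use t in auto)
  define B where "B = (\<lambda>l. inverse (N l * q l) * (1 / (1 - R1 l)^2 + (R2 l)^2 / (1 - R2 l)^2))"
  have B: "(B \<longlongrightarrow> 0) (at_right 0)"
  proof -
    have "(B \<longlongrightarrow> 0 * (1 / (1 - 0)^2 + 0^2 / (1 - 0)^2)) (at_right 0)"
      unfolding B_def by (intro tendsto_intros Nq R1 R2) auto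
    thus ?thesis by simp
  qed
  have ev1: "eventually (\<lambda>l. R1 l < 1/2) (at_right 0)" using R1 by (intro order_tendstoD) auto
  have ev2: "eventually (\<lambda>l. R2 l < 1/2) (at_right 0)" using R2 by (intro order_tendstoD) auto
  have ev: "eventually (\<lambda>l. prob {\<omega>\<in>space M. \<bar>U_proc nu T1 X (a l) (m l) t \<omega> - t\<bar> \<ge> \<delta>} \<le> B l) (at_right 0)"
    using ev1 ev2 a_pos_ev
  proof eventually_elim
    fix l assume r1: "R1 l < 1/2" and r2: "R2 l < 1/2" and l: "l \<in> {0<..1}"
    have c: "a l > 0" using a_pos[OF l] .
    have qp: "q l > 0" unfolding q_def by (rule G_pos)
    have Np: "N l > 0" unfolding N_def by simp
    have gsp: "G (a l * s') > 0" by (rule G_pos)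
    have gs: "G (a l * s) < q l" using r1 qp unfolding R1_def by (simp add: divide_less_eq)
    have gs': "q l < G (a l * s')" using r2 gsp unfolding R2_def by (simp add: divide_less_eq)
    have "prob {\<omega>\<in>space M. \<bar>U_proc nu T1 X (a l) (m l) t \<omega> - t\<bar> \<ge> \<delta>}
       \<le> N l * q l / (N l * (q l - G (a l * s)))^2 + N l * q l / (N l * (G (a l * s') - q l))^2"
      using parti_point[OF c t \<delta>] gs gs' unfolding q_def N_def s_def s'_def by simp
    also have "\<dots> = B l"
    proof -
      have e1: "G (a l * s) = R1 l * q l" unfolding R1_def using qp by simp
      have e2: "G (a l * s') = q l / R2 l" unfolding R2_def using qp gsp by simp
      have r2p: "R2 l > 0" unfolding R2_def using qp gsp by simp
      have gen: "x / (x*y)^2 = inverse x * (1 / y^2)" if "x > 0" "y \<noteq> 0" for x y :: real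
        using that by (simp add: field_simps power2_eq_square)
      have f1: "N l * (q l - R1 l * q l) = (N l * q l) * (1 - R1 l)" by (simp add: algebra_simps)
      have f2: "N l * (q l / R2 l - q l) = (N l * q l) * ((1 - R2 l) / R2 l)" using r2p by (simp add: field_simps)
      have t1: "N l * q l / (N l * (q l - R1 l * q l))^2 = inverse (N l * q l) * (1 / (1 - R1 l)^2)"
        unfolding f1 by (rule gen) (use qp Np r1 in auto)
      have t2: "N l * q l / (N l * (q l / R2 l - q l))^2 = inverse (N l * q l) * ((R2 l)^2 / (1 - R2 l)^2)"
        unfolding f2 using gen[of "N l * q l" "(1 - R2 l) / R2 l"] qp Np r2 r2p by (simp add: power_divide)
      show ?thesis unfolding B_def e1 e2 t1 t2 by (simp add: distrib_left)
    qed
    finally show "prob {\<omega>\<in>space M. \<bar>U_proc nu T1 X (a l) (m l) t \<omega> - t\<bar> \<ge> \<delta>} \<le> B l" .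
  qed
  show ?thesis
    by (rule tendsto_sandwich[OF _ ev tendsto_const B]) simp
qed

lemma partI:
  assumes \<epsilon>: "\<epsilon> > 0" and T: "T > 0"
  shows "((\<lambda>l. prob {\<omega>\<in>space M. (SUP t\<in>{0..T}. \<bar>U_proc nu T1 X (a l) (m l) t \<omega> - min t 1\<bar>) > \<epsilon>}) \<longlongrightarrow> 0) (at_right 0)"
proof -
  define \<delta> where "\<delta> = \<epsilon> / 2"
  have dp: "\<delta> > 0" using \<epsilon> by (simp add: \<delta>_def)
  define K where "K = max 2 (nat \<lceil>1 / \<delta>\<rceil>)"
  have K: "K \<ge> 2" by (simp add: K_def)
  have Kd: "1 / real K \<le> \<delta>"
  proof -
    have "1 / \<delta> \<le> real (nat \<lceil>1 / \<delta>\<rceil>)" by (rule real_nat_ceiling_ge)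
    also have "\<dots> \<le> real K" by (simp add: K_def)
    finally have "real K \<ge> 1 / \<delta>" .
    thus ?thesis using dp K by (simp add: divide_le_eq mult.commute)
  qed
  define J where "J = {1..K-1}"
  define E where "E = (\<lambda>l j. {\<omega>\<in>space M. \<bar>U_proc nu T1 X (a l) (m l) (real j / real K) \<omega> - real j / real K\<bar> \<ge> \<delta>})"
  have lim: "((\<lambda>l. \<Sum>j\<in>J. prob (E l j)) \<longlongrightarrow> 0) (at_right 0)"
  proof (rule tendsto_null_sum)
    fix j assume j: "j \<in> J"
    have "0 < real j / real K" "real j / real K < 1" using j K by (auto simp: J_def)
    thus "((\<lambda>l. prob (E l j)) \<longlongrightarrow> 0) (at_right 0)" unfolding E_def by (intro parti_lim dp)
  qed
  have ev: "eventually (\<lambda>l. prob {\<omega>\<in>space M. (SUP t\<in>{0..T}. \<bar>U_proc nu T1 X (a l) (m l) t \<omega> - min t 1\<bar>) > \<epsilon>}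
               \<le> (\<Sum>j\<in>J. prob (E l j))) (at_right 0)"
    using a_pos_ev
  proof eventually_elim
    fix l :: real assume l: "l \<in> {0<..1}"
    have c: "a l > 0" by (rule a_pos[OF l])
    have sub: "{\<omega>\<in>space M. (SUP t\<in>{0..T}. \<bar>U_proc nu T1 X (a l) (m l) t \<omega> - min t 1\<bar>) > \<epsilon>} \<subseteq> (\<Union>j\<in>J. E l j)"
    proof
      fix \<omega> assume w: "\<omega> \<in> {\<omega>\<in>space M. (SUP t\<in>{0..T}. \<bar>U_proc nu T1 X (a l) (m l) t \<omega> - min t 1\<bar>) > \<epsilon>}"
      show "\<omega> \<in> (\<Union>j\<in>J. E l j)"
      proof (rule ccontr)
        assume "\<omega> \<notin> (\<Union>j\<in>J. E l j)"
        hence good: "\<forall>j\<in>{1..K-1}. \<bar>U_proc nu T1 X (a l) (m l) (real j / real K) \<omega> - real j / real K\<bar> < \<delta>"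
          using w by (auto simp: E_def J_def not_le)
        have "\<forall>t\<in>{0..T}. \<bar>U_proc nu T1 X (a l) (m l) t \<omega> - min t 1\<bar> < 2*\<delta>"
          using grid[OF U_mono[OF c] U_bounds[OF c] K Kd good] by auto
        hence "(SUP t\<in>{0..T}. \<bar>U_proc nu T1 X (a l) (m l) t \<omega> - min t 1\<bar>) \<le> \<epsilon>"
          using T by (intro cSUP_least) (auto simp: \<delta>_def less_imp_le)
        thus False using w by simp
      qed
    qed
    have "prob {\<omega>\<in>space M. (SUP t\<in>{0..T}. \<bar>U_proc nu T1 X (a l) (m l) t \<omega> - min t 1\<bar>) > \<epsilon>} \<le> prob (\<Union>j\<in>J. E l j)"
      by (rule finite_measure_mono[OF sub]) (auto simp: E_def J_def intro!: U_sets)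
    also have "\<dots> \<le> (\<Sum>j\<in>J. prob (E l j))"
      by (rule measure_UNION_le) (auto simp: E_def J_def intro!: U_sets)
    finally show "prob {\<omega>\<in>space M. (SUP t\<in>{0..T}. \<bar>U_proc nu T1 X (a l) (m l) t \<omega> - min t 1\<bar>) > \<epsilon>}
               \<le> (\<Sum>j\<in>J. prob (E l j))" .
  qed
  show ?thesis by (rule tendsto_sandwich[OF _ ev tendsto_const lim]) simp
qed

end

lemma clB_good:
  fixes b :: "int \<Rightarrow> bool" and k1 k3 :: nat
  assumes all1: "\<forall>j\<in>{0..int k1}. b j"
    and z1: "j1 \<in> {1..int k3}" "\<not> b j1" and z2: "j2 \<in> {-int k3..-1}" "\<not> b j2"
  shows "clB b \<subseteq> {-(int k3 - 1)..int k3 - 1}" and "{0..int k1} \<subseteq> clB b"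
proof -
  have b0: "b 0" using all1 by auto
  show "clB b \<subseteq> {-(int k3 - 1)..int k3 - 1}"
  proof
    fix j assume j: "j \<in> clB b"
    have "j < j1"
    proof (rule ccontr)
      assume "\<not> j < j1"
      hence "j1 \<in> clB b" using z1 by (intro clB_interval[OF j]) auto
      hence "b j1" unfolding clB_def by (auto split: if_splits)
      thus False using z1 by simp
    qed
    moreover have "j > j2"
    proof (rule ccontr)
      assume "\<not> j > j2"
      hence "j2 \<in> clB b" using z2 by (intro clB_interval[OF j]) auto
      hence "b j2" unfolding clB_def by (auto split: if_splits)
      thus False using z2 by simp
    qed
    ultimately show "j \<in> {-(int k3 - 1)..int k3 - 1}" using z1 z2 by auto
  qed
  show "{0..int k1} \<subseteq> clB b"
  proof
    fix j assume j: "j \<in> {0..int k1}"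
    have "\<forall>k\<in>{min 0 j..max 0 j}. b k" using j all1 by auto
    thus "j \<in> clB b" using b0 by (simp add: clB_def)
  qed
qed

context SR begin

lemma Vf_Uf: "C \<noteq> {} \<Longrightarrow> finite C \<Longrightarrow> Vf nu c C = Uf c (1 - 1 / real (card C))"
  by (simp add: Vf_def Uf_def)

lemma V_bounds:
  assumes c: "c > 0" and C: "C \<noteq> {}" "finite C"
    and up: "real (card C) \<le> 1 / G (c * s)" and lo: "real (card C) > 1 / G (c * s')"
    and s: "s > 0" and s': "0 < s'" "s' < 1"
  shows "s' < Vf nu c C \<and> Vf nu c C \<le> s"
proof -
  have cp: "real (card C) > 0" using C by (simp add: card_gt_0_iff)
  have g1: "G (c * s) > 0" "G (c * s') > 0" by (rule G_pos)+
  have "1 / real (card C) \<ge> G (c * s)"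
    using up cp g1 by (simp add: le_divide_eq divide_le_eq mult.commute)
  hence "1 - 1 / real (card C) \<le> F (c * s)" using FG[of "c * s"] c s by simp
  hence "Uf c (1 - 1 / real (card C)) \<le> s" by (rule Uf_upper[OF c s])
  moreover have "1 / real (card C) < G (c * s')"
    using lo cp g1 by (simp add: divide_less_eq less_divide_eq mult.commute)
  hence "1 - 1 / real (card C) > F (c * s')" using FG[of "c * s'"] c s' by simp
  hence "Uf c (1 - 1 / real (card C)) > s'" by (rule Uf_lower[OF c s'])
  ultimately show ?thesis using Vf_Uf[OF C] by simp
qed

lemma G0: "G 0 = 1" using nu_pos1 by (simp add: G_def)

lemma partii_zero:
  assumes \<epsilon>: "\<epsilon> > 0"
  shows "prob {\<omega>\<in>space M. C_clus T1 X c 0 \<omega> \<subseteq> {- int n..int n} \<and> \<bar>V_proc nu T1 X c 0 \<omega> - 0\<bar> < \<epsilon>} = 1"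
proof -
  have ev: "{\<omega>\<in>space M. C_clus T1 X c 0 \<omega> \<subseteq> {- int n..int n} \<and> \<bar>V_proc nu T1 X c 0 \<omega> - 0\<bar> < \<epsilon>} \<in> events"
    using set_ii_sets[of c 0 n \<epsilon>] by simp
  have "prob {\<omega>\<in>space M. T1 0 \<omega> > 0} = 1" using prob_gt[of 0 0] G0 by simp
  moreover have "{\<omega>\<in>space M. T1 0 \<omega> > 0} \<in> events" by measurable
  ultimately have "AE \<omega> in M. \<omega> \<in> {\<omega>\<in>space M. T1 0 \<omega> > 0}" using AE_in_set_eq_1 by blast
  hence "AE \<omega> in M. T1 0 \<omega> > 0" by simp
  hence "AE \<omega> in M. \<omega> \<in> {\<omega>\<in>space M. C_clus T1 X c 0 \<omega> \<subseteq> {- int n..int n} \<and> \<bar>V_proc nu T1 X c 0 \<omega> - 0\<bar> < \<epsilon>}"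
    using X_pos_AE AE_space
  proof eventually_elim
    fix \<omega> assume w: "T1 0 \<omega> > 0" and cl: "\<forall>i k. k \<ge> 1 \<longrightarrow> X i k \<omega> \<ge> 0" and sp: "\<omega> \<in> space M"
    have "\<not> occ T1 X c 0 0 \<omega>" using occ_clean[of X 0 \<omega> T1 c 0] cl w by simp
    hence "C_clus T1 X c 0 \<omega> = {}" unfolding C_clus_occ clB_def by simp
    thus "\<omega> \<in> {\<omega>\<in>space M. C_clus T1 X c 0 \<omega> \<subseteq> {- int n..int n} \<and> \<bar>V_proc nu T1 X c 0 \<omega> - 0\<bar> < \<epsilon>}"
      using \<epsilon> sp by (simp add: V_Vf Vf_def)
  qed
  thus ?thesis using AE_in_set_eq_1[OF ev] by simp
qed

lemma prob_all_le2: "finite J \<Longrightarrow> prob {\<omega>\<in>space M. \<forall>j\<in>J. T1 j \<omega> \<le> x} \<le> (1 - G x) ^ card J"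
proof -
  assume fin: "finite J"
  show ?thesis
  proof (cases "J = {}")
    case True thus ?thesis by simp
  next
    case False
    have "{\<omega>\<in>space M. \<forall>j\<in>J. T1 j \<omega> \<le> x} = (\<Inter>i\<in>J. {\<omega>\<in>space M. T1 i \<omega> \<le> x})" using False by auto
    thus ?thesis using prob_all_le[OF fin, of x] by simp
  qed
qed

lemma partii_point:
  fixes c t \<epsilon> :: real and n :: nat
  defines "q \<equiv> G (c * t)" and "s \<equiv> t + \<epsilon>/2" and "s' \<equiv> max (t/2) (t - \<epsilon>/2)"
  defines "k1 \<equiv> nat \<lceil>1 / G (c * s')\<rceil>" and "k2 \<equiv> nat \<lfloor>(1 / G (c * s) + 1) / 2\<rfloor>"
  defines "k3 \<equiv> min k2 n"
  assumes c: "c > 0" and t: "0 < t" "t < 1" and \<epsilon>: "\<epsilon> > 0"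
  shows "prob {\<omega>\<in>space M. C_clus T1 X c t \<omega> \<subseteq> {- int n..int n} \<and> \<bar>V_proc nu T1 X c t \<omega> - t\<bar> < \<epsilon>}
     \<ge> 1 - (real (k1+1) * q + 2 * (1 - q) ^ k3)"
proof -
  define Tg where "Tg = {\<omega>\<in>space M. C_clus T1 X c t \<omega> \<subseteq> {- int n..int n} \<and> \<bar>V_proc nu T1 X c t \<omega> - t\<bar> < \<epsilon>}"
  define Bd1 where "Bd1 = {\<omega>\<in>space M. \<exists>j\<in>{0..int k1}. T1 j \<omega> > c * t}"
  define Bd2 where "Bd2 = {\<omega>\<in>space M. \<forall>j\<in>{1..int k3}. T1 j \<omega> \<le> c * t}"
  define Bd3 where "Bd3 = {\<omega>\<in>space M. \<forall>j\<in>{-int k3..-1}. T1 j \<omega> \<le> c * t}"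
  have Tgm: "Tg \<in> events" unfolding Tg_def by (rule set_ii_sets)
  have m1: "Bd1 \<in> events" unfolding Bd1_def by (intro sets.sets_Collect_finite_Ex) auto
  have m2: "Bd2 \<in> events" unfolding Bd2_def by (intro sets.sets_Collect_finite_All) auto
  have m3: "Bd3 \<in> events" unfolding Bd3_def by (intro sets.sets_Collect_finite_All) auto
  have p1: "prob Bd1 \<le> real (k1+1) * q"
  proof -
    have "Bd1 = (\<Union>j\<in>{0..int k1}. {\<omega>\<in>space M. T1 j \<omega> > c * t})" unfolding Bd1_def by auto
    hence "prob Bd1 \<le> (\<Sum>j\<in>{0..int k1}. prob {\<omega>\<in>space M. T1 j \<omega> > c * t})"
      by (simp only:) (rule measure_UNION_le, auto)
    also have "\<dots> = real (k1+1) * q" by (simp add: prob_gt q_def)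
    finally show ?thesis .
  qed
  have p2: "prob Bd2 \<le> (1 - q) ^ k3" unfolding Bd2_def q_def using prob_all_le2[of "{1..int k3}" "c * t"] by simp
  have p3: "prob Bd3 \<le> (1 - q) ^ k3" unfolding Bd3_def q_def using prob_all_le2[of "{-int k3..-1}" "c * t"] by simp
  have sp: "s > 0" "s' > 0" "s' < 1" using t \<epsilon> by (auto simp: s_def s'_def)
  have gsp: "G (c * s) > 0" "G (c * s') > 0" by (rule G_pos)+
  have k1b: "real k1 \<ge> 1 / G (c * s')" unfolding k1_def by (rule real_nat_ceiling_ge)
  have k2b: "2 * real k2 - 1 \<le> 1 / G (c * s)"
  proof -
    have "1 / G (c * s) \<ge> 0" using gsp by simp
    hence "real k2 = real_of_int \<lfloor>(1 / G (c * s) + 1) / 2\<rfloor>" unfolding k2_def by (simp add: of_nat_nat)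
    moreover have "real_of_int \<lfloor>(1 / G (c * s) + 1) / 2\<rfloor> \<le> (1 / G (c * s) + 1) / 2" by (rule of_int_floor_le)
    ultimately have "real k2 \<le> (1 / G (c * s) + 1) / 2" by simp
    thus ?thesis by simp
  qed
  have incl: "AE \<omega> in M. \<omega> \<in> space M - (Bd1 \<union> Bd2 \<union> Bd3) \<longrightarrow> \<omega> \<in> Tg"
    using X_pos_AE
  proof eventually_elim
    fix \<omega> assume cl: "\<forall>i k. k \<ge> 1 \<longrightarrow> X i k \<omega> \<ge> 0"
    show "\<omega> \<in> space M - (Bd1 \<union> Bd2 \<union> Bd3) \<longrightarrow> \<omega> \<in> Tg"
    proof
      assume w: "\<omega> \<in> space M - (Bd1 \<union> Bd2 \<union> Bd3)"
      define b where "b = (\<lambda>i. occ T1 X c t i \<omega>)"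
      have bT: "b i \<longleftrightarrow> T1 i \<omega> \<le> c * t" for i unfolding b_def using occ_clean[of X i \<omega> T1 c t] cl by simp
      have all1: "\<forall>j\<in>{0..int k1}. b j" using w unfolding Bd1_def bT by (auto simp: not_less)
      obtain j1 where z1: "j1 \<in> {1..int k3}" "\<not> b j1" using w unfolding Bd2_def bT by auto
      obtain j2 where z2: "j2 \<in> {-int k3..-1}" "\<not> b j2" using w unfolding Bd3_def bT by auto
      have C: "C_clus T1 X c t \<omega> = clB b" unfolding C_clus_occ b_def ..
      have sub: "clB b \<subseteq> {-(int k3 - 1)..int k3 - 1}" and sup: "{0..int k1} \<subseteq> clB b"
        using clB_good[OF all1 z1 z2] by auto
      have k3n: "k3 \<le> n" by (simp add: k3_def)
      have k3p: "k3 \<ge> 1" using z1 by auto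
      have subn: "clB b \<subseteq> {- int n..int n}" using sub k3n by auto
      have fin: "finite (clB b)" using sub by (rule finite_subset) simp
      have ne: "clB b \<noteq> {}" using sup by auto
      have "card (clB b) \<le> card {-(int k3 - 1)..int k3 - 1}" by (rule card_mono[OF _ sub]) simp
      hence "real (card (clB b)) \<le> 2 * real k3 - 1" using k3p by (simp add: nat_diff_distrib)
      also have "\<dots> \<le> 2 * real k2 - 1" by (simp add: k3_def)
      also have "\<dots> \<le> 1 / G (c * s)" by (rule k2b)
      finally have up: "real (card (clB b)) \<le> 1 / G (c * s)" .
      have "card {0..int k1} \<le> card (clB b)" by (rule card_mono[OF fin sup])
      hence "real (card (clB b)) \<ge> real k1 + 1" by simp
      hence lo: "real (card (clB b)) > 1 / G (c * s')" using k1b by linarith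
      have "s' < Vf nu c (clB b) \<and> Vf nu c (clB b) \<le> s" by (rule V_bounds[OF c ne fin up lo sp])
      hence "\<bar>V_proc nu T1 X c t \<omega> - t\<bar> < \<epsilon>" unfolding V_Vf C using \<epsilon> by (auto simp: s_def s'_def abs_if)
      thus "\<omega> \<in> Tg" using w subn C unfolding Tg_def by simp
    qed
  qed
  have "prob (space M - (Bd1 \<union> Bd2 \<union> Bd3)) \<le> prob Tg"
    by (rule finite_measure_mono_AE[OF incl Tgm])
  moreover have "prob (space M - (Bd1 \<union> Bd2 \<union> Bd3)) = 1 - prob (Bd1 \<union> Bd2 \<union> Bd3)"
    by (rule prob_compl) (use m1 m2 m3 in auto)
  moreover have "prob (Bd1 \<union> Bd2 \<union> Bd3) \<le> prob Bd1 + prob Bd2 + prob Bd3"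
    using measure_Un_le[of "Bd1 \<union> Bd2" M Bd3] measure_Un_le[of Bd1 M Bd2] m1 m2 m3 by auto
  ultimately show ?thesis using p1 p2 p3 unfolding Tg_def by linarith
qed

end

lemma pow_exp: "0 \<le> q \<Longrightarrow> q \<le> 1 \<Longrightarrow> (1 - q) ^ k \<le> exp (- (q * real k))"
proof -
  assume q: "0 \<le> q" "q \<le> 1"
  have "(1 - q) ^ k \<le> exp (-q) ^ k"
    by (rule power_mono) (use q exp_ge_add_one_self[of "-q"] in auto)
  also have "\<dots> = exp (- (q * real k))" by (simp add: exp_of_nat_mult[symmetric] mult.commute)
  finally show ?thesis .
qed

lemma exp_neg_lim: "filterlim (f :: 'a \<Rightarrow> real) at_top F \<Longrightarrow> ((\<lambda>x. exp (- f x)) \<longlongrightarrow> 0) F"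
proof -
  assume f: "filterlim f at_top F"
  have "filterlim (\<lambda>x. exp (f x)) at_top F" by (rule filterlim_compose[OF exp_at_top f])
  hence "((\<lambda>x. inverse (exp (f x))) \<longlongrightarrow> 0) F" by (rule tendsto_inverse_0_at_top)
  thus ?thesis by (simp add: exp_minus)
qed

lemma filterlim_min_top:
  assumes f: "filterlim f at_top F" and g: "filterlim g at_top F"
  shows "filterlim (\<lambda>x. min (f x) (g x) :: real) at_top F"
  unfolding filterlim_at_top
proof
  fix Z :: real
  have "eventually (\<lambda>x. Z \<le> f x) F" "eventually (\<lambda>x. Z \<le> g x) F"
    using f g by (auto simp: filterlim_at_top)
  thus "eventually (\<lambda>x. Z \<le> min (f x) (g x)) F" by eventually_elim simp
qed

context SR begin

lemma partii_lim:
  assumes t: "0 < t" "t < 1" and \<epsilon>: "\<epsilon> > 0"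
  shows "((\<lambda>l. prob {\<omega>\<in>space M. C_clus T1 X (a l) t \<omega> \<subseteq> {- int (m l)..int (m l)}
             \<and> \<bar>V_proc nu T1 X (a l) t \<omega> - t\<bar> < \<epsilon>}) \<longlongrightarrow> 1) (at_right 0)"
proof -
  define s where "s = t + \<epsilon>/2"
  define s' where "s' = max (t/2) (t - \<epsilon>/2)"
  have ss: "0 < s'" "s' < t" "t < s" using t \<epsilon> by (auto simp: s_def s'_def)
  define q where "q = (\<lambda>l. G (a l * t))"
  define k1 where "k1 = (\<lambda>l. nat \<lceil>1 / G (a l * s')\<rceil>)"
  define k2 where "k2 = (\<lambda>l. nat \<lfloor>(1 / G (a l * s) + 1) / 2\<rfloor>)"
  define k3 where "k3 = (\<lambda>l. min (k2 l) (m l))"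
  define Bnd where "Bnd = (\<lambda>l. real (k1 l + 1) * q l + 2 * (1 - q l) ^ k3 l)"
  have q01: "0 < q l" "q l \<le> 1" for l unfolding q_def by (auto intro: G_pos G_le1)
  have q0: "(q \<longlongrightarrow> 0) (at_right 0)" unfolding q_def by (rule G_at_0[OF t(1)])
  have R: "((\<lambda>l. q l / G (a l * s')) \<longlongrightarrow> 0) (at_right 0)" unfolding q_def using ratio_0[of s' t] ss by simp
  have qn: "filterlim (\<lambda>l. q l * real (m l)) at_top (at_right 0)"
    using m_nu t unfolding q_def by (simp add: G_def mult.commute)
  have qk2: "filterlim (\<lambda>l. q l * real (k2 l)) at_top (at_right 0)"
  proof (rule filterlim_at_top_mono)
    have r: "filterlim (\<lambda>l. G (a l * t) / G (a l * s)) at_top (at_right 0)" using ratio_inf[of t s] ss t by simp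
    have "filterlim (\<lambda>l. G (a l * t) / G (a l * s) * (1/2)) at_top (at_right 0)"
      using filterlim_at_top_mult_tendsto_pos[OF tendsto_const[of "1/2::real"] _ r] by simp
    thus "filterlim (\<lambda>l. (-1/2) + (G (a l * t) / G (a l * s) * (1/2))) at_top (at_right 0)"
      by (rule filterlim_tendsto_add_at_top[OF tendsto_const])
    show "\<forall>\<^sub>F l in at_right 0. (-1/2) + G (a l * t) / G (a l * s) * (1/2) \<le> q l * real (k2 l)"
    proof (intro always_eventually allI)
      fix l
      define x where "x = 1 / G (a l * s)"
      have xp: "x > 0" unfolding x_def using G_pos by simp
      have fl: "\<lfloor>(x + 1) / 2\<rfloor> \<ge> 0" using xp by simp
      have "real (k2 l) = real_of_int \<lfloor>(x + 1) / 2\<rfloor>" unfolding k2_def x_def[symmetric] using fl by (simp only: of_nat_nat)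
      hence k2x: "real (k2 l) \<ge> (x + 1) / 2 - 1" by linarith
      have A1: "q l * real (k2 l) \<ge> q l * ((x + 1) / 2 - 1)" using k2x q01[of l] by (intro mult_left_mono) auto
      have A2: "q l * ((x + 1) / 2 - 1) = q l * x / 2 - q l / 2" by (simp add: field_simps)
      have A3: "G (a l * t) / G (a l * s) * (1/2) = q l * x / 2" by (simp add: q_def x_def)
      show "(-1/2) + G (a l * t) / G (a l * s) * (1/2) \<le> q l * real (k2 l)"
        using A1 A2 A3 q01[of l] by linarith
    qed
  qed
  have qk3: "filterlim (\<lambda>l. q l * real (k3 l)) at_top (at_right 0)"
  proof -
    have "filterlim (\<lambda>l. min (q l * real (k2 l)) (q l * real (m l))) at_top (at_right 0)"
      by (rule filterlim_min_top[OF qk2 qn])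
    moreover have "min (q l * real (k2 l)) (q l * real (m l)) = q l * real (k3 l)" for l
      using q01[of l] by (simp add: k3_def min_mult_distrib_left of_nat_min)
    ultimately show ?thesis by simp
  qed
  define Bnd' where "Bnd' = (\<lambda>l. q l / G (a l * s') + 2 * q l + 2 * exp (- (q l * real (k3 l))))"
  have Bnd'0: "(Bnd' \<longlongrightarrow> 0) (at_right 0)"
  proof -
    have "(Bnd' \<longlongrightarrow> 0 + 2 * 0 + 2 * 0) (at_right 0)"
      unfolding Bnd'_def by (intro tendsto_intros R q0 exp_neg_lim[OF qk3])
    thus ?thesis by simp
  qed
  have BB: "Bnd l \<le> Bnd' l" for l
  proof -
    have xp: "1 / G (a l * s') > 0" using G_pos by simp
    have "real (k1 l) = real_of_int \<lceil>1 / G (a l * s')\<rceil>" unfolding k1_def using xp by (simp add: of_nat_nat)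
    hence "real (k1 l) \<le> 1 / G (a l * s') + 1" by linarith
    hence "real (k1 l + 1) * q l \<le> (1 / G (a l * s') + 2) * q l" using q01[of l] by (intro mult_right_mono) auto
    also have "\<dots> = q l / G (a l * s') + 2 * q l" by (simp add: algebra_simps)
    finally have A: "real (k1 l + 1) * q l \<le> q l / G (a l * s') + 2 * q l" .
    have "(1 - q l) ^ k3 l \<le> exp (- (q l * real (k3 l)))" using q01[of l] by (intro pow_exp) auto
    thus ?thesis using A unfolding Bnd_def Bnd'_def by simp
  qed
  have Bnd0: "(Bnd \<longlongrightarrow> 0) (at_right 0)"
  proof (rule tendsto_sandwich[OF _ _ tendsto_const Bnd'0])
    show "\<forall>\<^sub>F l in at_right 0. 0 \<le> Bnd l"
    proof (intro always_eventually allI)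
      fix l
      have "0 \<le> (1 - q l) ^ k3 l" using q01[of l] by simp
      moreover have "0 \<le> real (k1 l + 1) * q l" using q01[of l] by simp
      ultimately show "0 \<le> Bnd l" unfolding Bnd_def by simp
    qed
    show "\<forall>\<^sub>F l in at_right 0. Bnd l \<le> Bnd' l" by (intro always_eventually allI BB)
  qed
  have low: "eventually (\<lambda>l. 1 - Bnd l \<le> prob {\<omega>\<in>space M. C_clus T1 X (a l) t \<omega> \<subseteq> {- int (m l)..int (m l)}
             \<and> \<bar>V_proc nu T1 X (a l) t \<omega> - t\<bar> < \<epsilon>}) (at_right 0)"
    using a_pos_ev
  proof eventually_elim
    fix l :: real assume l: "l \<in> {0<..1}"
    show "1 - Bnd l \<le> prob {\<omega>\<in>space M. C_clus T1 X (a l) t \<omega> \<subseteq> {- int (m l)..int (m l)}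
             \<and> \<bar>V_proc nu T1 X (a l) t \<omega> - t\<bar> < \<epsilon>}"
      using partii_point[OF a_pos[OF l] t \<epsilon>, of "m l"]
      unfolding Bnd_def k1_def k2_def k3_def q_def s_def s'_def by simp
  qed
  have "((\<lambda>l. 1 - Bnd l) \<longlongrightarrow> 1 - 0) (at_right 0)" by (intro tendsto_intros Bnd0)
  thus ?thesis by (intro tendsto_sandwich[OF low _ _ tendsto_const]) auto
qed

end

context SR begin
lemma partii_zero': "\<epsilon> > 0 \<Longrightarrow> prob {\<omega>\<in>space M. C_clus T1 X c 0 \<omega> \<subseteq> {- int n..int n} \<and> \<bar>V_proc nu T1 X c 0 \<omega>\<bar> < \<epsilon>} = 1"
  using partii_zero[of \<epsilon> c n] by simp
end

theorem mainTheorem11: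
  fixes M :: "'a measure"
    and muS :: "real measure"
    and T1 :: "int \<Rightarrow> 'a \<Rightarrow> real"
    and X :: "int \<Rightarrow> nat \<Rightarrow> 'a \<Rightarrow> real"
    and a :: "real \<Rightarrow> real"
    and m :: "real \<Rightarrow> nat"
  assumes PM: "prob_space M"
    and mu_prob: "prob_space muS" and mu_sets: "sets muS = sets borel"
    and mu_pos: "measure muS {0<..} = 1"
    and mu_unbdd: "\<forall>x. measure muS {x<..} > 0"
    and mu_mean: "integrable muS (\<lambda>x. x)"
    and H_inf: "\<forall>t>0. (t < 1 \<longrightarrow> ((\<lambda>x. measure (stat_nu muS) {x<..} / measure (stat_nu muS) {t*x<..})
                              \<longlongrightarrow> 0) at_top)
                   \<and> (t = 1 \<longrightarrow> ((\<lambda>x. measure (stat_nu muS) {x<..} / measure (stat_nu muS) {t*x<..})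
                              \<longlongrightarrow> 1) at_top)
                   \<and> (t > 1 \<longrightarrow> filterlim (\<lambda>x. measure (stat_nu muS) {x<..} / measure (stat_nu muS) {t*x<..})
                              at_top at_top)"
    and a_def: "\<forall>l\<in>{0<..1}. l * a l = measure (stat_nu muS) {a l<..}"
    and m_mono: "\<forall>l1 l2. 0 < l1 \<and> l1 \<le> l2 \<and> l2 \<le> 1 \<longrightarrow> m l2 \<le> m l1"
    and m_inf: "filterlim m at_top (at_right 0)"
    and m_n: "((\<lambda>l. real (m l) / real (nat \<lfloor>1 / (l * a l)\<rfloor>)) \<longlongrightarrow> 0) (at_right 0)"
    and m_nu: "\<forall>z\<in>{0..<1}. filterlim (\<lambda>l. real (m l) * measure (stat_nu muS) {a l * z<..})
                               at_top (at_right 0)"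
    and indep: "prob_space.indep_vars M (\<lambda>_. borel)
                  (\<lambda>p. case p of (i, 0) \<Rightarrow> T1 i | (i, Suc k) \<Rightarrow> X i (Suc k)) UNIV"
    and T1_distr: "\<forall>i. distr M borel (T1 i) = stat_nu muS"
    and X_distr: "\<forall>i. \<forall>k\<ge>1. distr M borel (X i k) = muS"
  shows
    "(\<forall>\<epsilon>>0. \<forall>T>0.
        (\<forall>l\<in>{0<..1}. {\<omega>\<in>space M. (SUP t\<in>{0..T}.
             \<bar>U_proc (stat_nu muS) T1 X (a l) (m l) t \<omega> - min t 1\<bar>) > \<epsilon>} \<in> sets M)
      \<and> ((\<lambda>l. measure M {\<omega>\<in>space M. (SUP t\<in>{0..T}.
             \<bar>U_proc (stat_nu muS) T1 X (a l) (m l) t \<omega> - min t 1\<bar>) > \<epsilon>}) \<longlongrightarrow> 0) (at_right 0))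
   \<and> (\<forall>\<epsilon>>0. \<forall>t\<in>{0..<1}.
        (\<forall>l\<in>{0<..1}. {\<omega>\<in>space M. C_clus T1 X (a l) t \<omega> \<subseteq> {- int (m l)..int (m l)}
             \<and> \<bar>V_proc (stat_nu muS) T1 X (a l) t \<omega> - t\<bar> < \<epsilon>} \<in> sets M)
      \<and> ((\<lambda>l. measure M {\<omega>\<in>space M. C_clus T1 X (a l) t \<omega> \<subseteq> {- int (m l)..int (m l)}
             \<and> \<bar>V_proc (stat_nu muS) T1 X (a l) t \<omega> - t\<bar> < \<epsilon>}) \<longlongrightarrow> 1) (at_right 0))"
proof -
  interpret SR M muS T1 X a m
  proof (rule SR.intro[OF PM], rule SR_axioms.intro)
    show "\<And>t. t > 1 \<Longrightarrow> filterlim (\<lambda>x. measure (stat_nu muS) {x<..} / measure (stat_nu muS) {t*x<..}) at_top at_top"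
      using H_inf by auto
  qed (use mu_prob mu_sets mu_pos mu_unbdd a_def m_nu indep T1_distr X_distr in auto)
  show ?thesis
    apply (intro conjI allI impI ballI)
    subgoal for \<epsilon> T l by (rule set_i_sets[OF a_pos]) auto
    subgoal for \<epsilon> T by (rule partI) auto
    subgoal for \<epsilon> t l by (rule set_ii_sets)
    subgoal for \<epsilon> t
      apply (cases "t = 0")
       apply (simp add: partii_zero')
      apply (rule partii_lim)
        apply auto
      done
    done
qed

end
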